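(* Let $\Omega\subset\mathbb{C}^n$ ($n\geq2$) be a bounded domain equipped with a Finsler metric $F$ whose distance $d_F$ is complete, and assume $(\Omega,d_F)$ is Gromov hyperbolic. Suppose there are constants $C_1,C_2,\alpha>0$ and $0<\beta<1$ such that \[ d_F(x,y)\geq \alpha\left|\log\left(\frac{\delta(x)}{\delta(y)}\right)\right|-C_1\quad\text{for all }x,y\in\Omega, \] and \[ F(z,X)\geq\frac{C_2|X|}{\delta(z)^{\beta}}\quad\text{for all }z\in\Omega,\ 0\neq X\in\mathbb{C}^n. \] Let $\lambda\ge1$. Then there exists a constant $C=C(\lambda)>0$ such that for all $x,y\in\Omega$ and every Finsler $\lambda$-quasi-geodesic $\gamma$ in $\Omega$ connecting $x$ and $y$, \[ d_F(x,y)\geq2\alpha\log\left(\frac{L(\gamma)^{\frac{1}{\beta}}}{\sqrt{\delta(x)\delta(y)}}\right)-C, \] where $L(\gamma)$ is the Euclidean length of $\gamma$.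
   Context: $\delta(z)$ is the Euclidean distance from $z$ to $\partial\Omega$. A Finsler metric on $\Omega$ is an upper semicontinuous map $F:\Omega\times\mathbb{C}^n\to[0,\infty)$ with $F(z;tX)=|t|F(z;X)$ for $t\in\mathbb{C}$; its distance $d_F(x,y)$ is the infimum of $\int_0^1F(\gamma(t);\dot\gamma(t))\,dt$ over piecewise $C^1$ curves $\gamma:[0,1]\to\Omega$ from $x$ to $y$. $(\Omega,d_F)$ is Gromov hyperbolic if it is a proper geodesic metric space and there is $\delta_0\ge0$ with $(x|y)_\omega\ge\min\{(x|z)_\omega,(z|y)_\omega\}-\delta_0$ for all $x,y,z,\omega$, where $(x|y)_\omega=\frac12(d_F(x,\omega)+d_F(y,\omega)-d_F(x,y))$. A Finsler $\lambda$-quasi-geodesic is a curve $\gamma:I\to\Omega$ with $\lambda^{-1}|t-s|\le d_F(\gamma(t),\gamma(s))\le\lambda|t-s|$ for all $s,t\in I$. The constant $C$ may also depend on $\Omega,F$ and the given constants. *)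

theory Defs
  imports "HOL-Analysis.Analysis"
begin

definition bdist :: "(complex^'n) set \<Rightarrow> complex^'n \<Rightarrow> real" where
  "bdist \<Omega> z = infdist z (frontier \<Omega>)"

definition finsler_metric :: "(complex^'n) set \<Rightarrow> (complex^'n \<Rightarrow> complex^'n \<Rightarrow> real) \<Rightarrow> bool" where
  "finsler_metric \<Omega> F \<longleftrightarrow>
     (\<forall>z\<in>\<Omega>. \<forall>X. F z X \<ge> 0) \<and>
     (\<forall>z\<in>\<Omega>. \<forall>X. \<forall>t::complex. F z (t *s X) = norm t * F z X) \<and>
     (\<forall>c::real. openin (top_of_set (\<Omega> \<times> UNIV)) {p \<in> \<Omega> \<times> UNIV. F (fst p) (snd p) < c})"

definition curves :: "(complex^'n) set \<Rightarrow> complex^'n \<Rightarrow> complex^'n \<Rightarrow> (real \<Rightarrow> complex^'n) set" where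
  "curves \<Omega> x y = {\<gamma>. \<gamma> piecewise_C1_differentiable_on {0..1} \<and> \<gamma> ` {0..1} \<subseteq> \<Omega> \<and>
                      \<gamma> 0 = x \<and> \<gamma> 1 = y}"

definition finsler_length :: "(complex^'n \<Rightarrow> complex^'n \<Rightarrow> real) \<Rightarrow> (real \<Rightarrow> complex^'n) \<Rightarrow> ennreal" where
  "finsler_length F \<gamma> = (\<integral>\<^sup>+ t\<in>{0..1}. ennreal (F (\<gamma> t) (vector_derivative \<gamma> (at t))) \<partial>lborel)"

definition finsler_dist :: "(complex^'n) set \<Rightarrow> (complex^'n \<Rightarrow> complex^'n \<Rightarrow> real) \<Rightarrow> complex^'n \<Rightarrow> complex^'n \<Rightarrow> real" where
  "finsler_dist \<Omega> F x y = enn2real (INF \<gamma>\<in>curves \<Omega> x y. finsler_length F \<gamma>)"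

definition gromov_prod :: "('a \<Rightarrow> 'a \<Rightarrow> real) \<Rightarrow> 'a \<Rightarrow> 'a \<Rightarrow> 'a \<Rightarrow> real" where
  "gromov_prod d x y w = (d x w + d y w - d x y) / 2"

definition proper_space :: "'a set \<Rightarrow> ('a \<Rightarrow> 'a \<Rightarrow> real) \<Rightarrow> bool" where
  "proper_space M d \<longleftrightarrow>
     (\<forall>x\<in>M. \<forall>r. compactin (Metric_space.mtopology M d) (Metric_space.mcball M d x r))"

definition geodesic_space :: "'a set \<Rightarrow> ('a \<Rightarrow> 'a \<Rightarrow> real) \<Rightarrow> bool" where
  "geodesic_space M d \<longleftrightarrow>
     (\<forall>x\<in>M. \<forall>y\<in>M. \<exists>g::real \<Rightarrow> 'a. g ` {0..d x y} \<subseteq> M \<and> g 0 = x \<and> g (d x y) = y \<and>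
        (\<forall>s\<in>{0..d x y}. \<forall>t\<in>{0..d x y}. d (g s) (g t) = \<bar>s - t\<bar>))"

definition gromov_hyperbolic :: "'a set \<Rightarrow> ('a \<Rightarrow> 'a \<Rightarrow> real) \<Rightarrow> bool" where
  "gromov_hyperbolic M d \<longleftrightarrow>
     Metric_space M d \<and> proper_space M d \<and> geodesic_space M d \<and>
     (\<exists>\<delta>0\<ge>0. \<forall>x\<in>M. \<forall>y\<in>M. \<forall>z\<in>M. \<forall>w\<in>M.
        gromov_prod d x y w \<ge> min (gromov_prod d x z w) (gromov_prod d z y w) - \<delta>0)"

definition quasi_geodesic :: "'a set \<Rightarrow> ('a \<Rightarrow> 'a \<Rightarrow> real) \<Rightarrow> real \<Rightarrow> (real \<Rightarrow> 'a) \<Rightarrow> real set \<Rightarrow> bool" where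
  "quasi_geodesic M d lam \<gamma> I \<longleftrightarrow> \<gamma> ` I \<subseteq> M \<and>
     (\<forall>s\<in>I. \<forall>t\<in>I. \<bar>t - s\<bar> / lam \<le> d (\<gamma> t) (\<gamma> s) \<and> d (\<gamma> t) (\<gamma> s) \<le> lam * \<bar>t - s\<bar>)"

definition euclid_length :: "(real \<Rightarrow> 'a::real_normed_vector) \<Rightarrow> real \<Rightarrow> real \<Rightarrow> real" where
  "euclid_length \<gamma> a b = Sup {(\<Sum>i<n. norm (\<gamma> (t (Suc i)) - \<gamma> (t i))) | t n.
       t 0 = a \<and> t n = b \<and> (\<forall>i<n. t i \<le> t (Suc i))}"

end

theory Submission
  imports Defs
begin


lemma bdist_pos:
  fixes \<Omega> :: "(complex^'n) set"
  assumes "open \<Omega>" "bounded \<Omega>" "z \<in> \<Omega>"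
  shows "bdist \<Omega> z > 0"
proof -
  have "\<Omega> \<noteq> UNIV" using assms(2) not_bounded_UNIV by auto
  then have "frontier \<Omega> \<noteq> {}" using assms(3) frontier_eq_empty by blast
  moreover have "z \<notin> frontier \<Omega>" using assms by (simp add: frontier_def interior_open)
  ultimately show ?thesis unfolding bdist_def
    by (intro infdist_pos_not_in_closed) (auto simp: frontier_closed)
qed

lemma bdist_lip:
  fixes \<Omega> :: "(complex^'n) set"
  shows "bdist \<Omega> x \<le> bdist \<Omega> y + norm (x - y)"
  unfolding bdist_def using infdist_triangle[of x "frontier \<Omega>" y] by (simp add: dist_norm)

lemma bdist_bounded:
  fixes \<Omega> :: "(complex^'n) set"
  assumes "bounded \<Omega>" "\<Omega> \<noteq> {}"
  shows "\<exists>Rb>0. \<forall>z\<in>\<Omega>. bdist \<Omega> z \<le> Rb"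
proof -
  have "\<Omega> \<noteq> UNIV" using assms(1) not_bounded_UNIV by auto
  then obtain f0 where f0: "f0 \<in> frontier \<Omega>" using assms(2) frontier_eq_empty by blast
  have "bounded (closure \<Omega>)" using assms(1) by (rule bounded_closure)
  then obtain B where B: "\<forall>x\<in>closure \<Omega>. norm x \<le> B" unfolding bounded_iff by auto
  have f0c: "f0 \<in> closure \<Omega>" using f0 by (simp add: frontier_def)
  have "bdist \<Omega> z \<le> 2 * \<bar>B\<bar> + 1" if "z \<in> \<Omega>" for z
  proof -
    have "bdist \<Omega> z \<le> dist z f0" unfolding bdist_def using f0 by (rule infdist_le)
    also have "\<dots> \<le> norm z + norm f0" by (simp add: dist_norm norm_triangle_ineq4)
    also have "\<dots> \<le> 2 * \<bar>B\<bar> + 1"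
    proof -
      have "norm z \<le> B" "norm f0 \<le> B" using B f0c that closure_subset[of \<Omega>] by auto
      then show ?thesis by linarith
    qed
    finally show ?thesis .
  qed
  then show ?thesis by (intro exI[of _ "2 * \<bar>B\<bar> + 1"]) auto
qed

lemma curve_lb:
  fixes \<Omega> :: "(complex^'n) set" and F :: "complex^'n \<Rightarrow> complex^'n \<Rightarrow> real"
  assumes fins: "finsler_metric \<Omega> F"
    and H2: "\<forall>z\<in>\<Omega>. \<forall>X. X \<noteq> 0 \<longrightarrow> F z X \<ge> C2 * norm X / (bdist \<Omega> z) powr \<beta>"
    and C2: "C2 > 0" and \<beta>: "\<beta> > 0"
    and bpos: "\<forall>z\<in>\<Omega>. bdist \<Omega> z > 0"
    and c: "c \<in> curves \<Omega> p q" and s1: "s1 \<in> {0..1}" and B: "B > 0"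
    and cB: "\<forall>s\<in>{0..s1}. bdist \<Omega> (c s) \<le> B"
  shows "finsler_length F c \<ge> ennreal (C2 * norm (c s1 - c 0) / B powr \<beta>)"
proof -
  define K where "K = C2 / B powr \<beta>"
  have K0: "K > 0" unfolding K_def using C2 B by simp
  have pc: "c piecewise_C1_differentiable_on {0..1}" and cin: "c ` {0..1} \<subseteq> \<Omega>"
    using c unfolding curves_def by auto
  obtain S where S: "finite S" "c C1_differentiable_on ({0..1} - S)" and cc: "continuous_on {0..1} c"
    using pc unfolding piecewise_C1_differentiable_on_def by auto
  define c' where "c' t = vector_derivative c (at t)" for t
  have der: "(c has_vector_derivative c' t) (at t)" if "t \<in> {0<..<s1} - S" for t
  proof -
    have "t \<in> {0..1} - S" using that s1 by auto
    then have "c differentiable at t" using S(2) unfolding C1_differentiable_on_eq by auto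
    then show ?thesis unfolding c'_def by (rule vector_derivative_works[THEN iffD1])
  qed
  have ftc: "(c' has_integral (c s1 - c 0)) {0..s1}"
    using s1 by (intro fundamental_theorem_of_calculus_interior_strong[OF S(1) _ der])
      (auto intro: continuous_on_subset[OF cc])
  have pt: "ennreal (K * norm (c' t)) * indicator {0..s1} t \<le> ennreal (F (c t) (c' t)) * indicator {0..1} t" for t
  proof (cases "t \<in> {0..s1}")
    case True
    then have t01: "t \<in> {0..1}" using s1 by auto
    then have ct: "c t \<in> \<Omega>" using cin by auto
    have "K * norm (c' t) \<le> F (c t) (c' t)"
    proof (cases "c' t = 0")
      case True
      then show ?thesis using fins ct unfolding finsler_metric_def by auto
    next
      case False
      have bp: "bdist \<Omega> (c t) > 0" using bpos ct by auto
      have "bdist \<Omega> (c t) powr \<beta> \<le> B powr \<beta>" using cB True bp \<beta> by (intro powr_mono2) auto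
      then have "C2 * norm (c' t) / B powr \<beta> \<le> C2 * norm (c' t) / bdist \<Omega> (c t) powr \<beta>"
        using bp C2 B by (intro divide_left_mono) auto
      also have "\<dots> \<le> F (c t) (c' t)" using H2 ct False by auto
      finally show ?thesis unfolding K_def by simp
    qed
    then show ?thesis using True t01 by (simp add: ennreal_leI)
  qed simp
  have "finsler_length F c \<ge> (\<integral>\<^sup>+ t. ennreal (K * norm (c' t)) * indicator {0..s1} t \<partial>lborel)"
    unfolding finsler_length_def c'_def[symmetric] by (intro nn_integral_mono) (use pt in auto)
  moreover have "(\<integral>\<^sup>+ t. ennreal (K * norm (c' t)) * indicator {0..s1} t \<partial>lborel) \<ge> ennreal (K * norm (c s1 - c 0))"
  proof -
    define g where "g t = indicator {0..s1} t * (K * norm (c' t))" for t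
    have "(\<lambda>t. indicator {0..s1} t *\<^sub>R c' t) \<in> lebesgue \<rightarrow>\<^sub>M borel"
      by (rule has_integral_implies_lebesgue_measurable[OF ftc])
    then have "(\<lambda>t. K * norm (indicator {0..s1} t *\<^sub>R c' t)) \<in> lebesgue \<rightarrow>\<^sub>M borel" by measurable
    moreover have "(\<lambda>t. K * norm (indicator {0..s1} t *\<^sub>R c' t)) = g"
      unfolding g_def by (auto simp: indicator_def)
    ultimately have gm: "g \<in> borel_measurable (completion lborel)" by simp
    obtain g' where g': "g' \<in> borel_measurable lborel" "AE t in lborel. g t = g' t"
      using completion_ex_borel_measurable_real[OF gm] by auto
    have eq1: "(\<integral>\<^sup>+ t. ennreal (K * norm (c' t)) * indicator {0..s1} t \<partial>lborel) = (\<integral>\<^sup>+ t. ennreal (g' t) \<partial>lborel)"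
    proof -
      have "(\<integral>\<^sup>+ t. ennreal (K * norm (c' t)) * indicator {0..s1} t \<partial>lborel) = (\<integral>\<^sup>+ t. ennreal (g t) \<partial>lborel)"
        unfolding g_def by (intro nn_integral_cong) (auto simp: indicator_def)
      also have "\<dots> = (\<integral>\<^sup>+ t. ennreal (g' t) \<partial>lborel)"
        using g'(2) by (intro nn_integral_cong_AE) auto
      finally show ?thesis .
    qed
    show ?thesis
    proof (cases "(\<integral>\<^sup>+ t. ennreal (g' t) \<partial>lborel) = \<infinity>")
      case True
      then show ?thesis using eq1 by simp
    next
      case False
      then obtain r where r: "(\<integral>\<^sup>+ t. ennreal (g' t) \<partial>lborel) = ennreal r" "r \<ge> 0"
        using ennreal_cases[of "(\<integral>\<^sup>+ t. ennreal (g' t) \<partial>lborel)"] by auto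
      have g'nn: "AE t in lborel. g' t \<ge> 0"
      proof -
        have gn: "g t \<ge> 0" for t unfolding g_def using K0 by simp
        show ?thesis using g'(2) by (rule eventually_mono) (metis gn)
      qed
      define g'' where "g'' t = max 0 (g' t)" for t
      have g''m: "g'' \<in> borel_measurable borel" unfolding g''_def using g'(1) by measurable
      have "(\<integral>\<^sup>+ t. ennreal (g'' t) \<partial>lborel) = ennreal r"
        using r g'nn unfolding g''_def by (subst nn_integral_cong_AE[where v="\<lambda>t. ennreal (g' t)"]) (auto elim!: eventually_mono)
      then have "(g'' has_integral r) UNIV"
        using g''m r by (intro nn_integral_has_integral) (auto simp: g''_def)
      moreover have "AE t in lborel. t \<in> UNIV \<longrightarrow> g'' t = g t"
        using g'(2) g'nn unfolding g''_def by eventually_elim auto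
      ultimately have "(g has_integral r) UNIV"
        using has_integral_AE[of UNIV g'' g r] by simp
      moreover have "g = (\<lambda>t. if t \<in> {0..s1} then K * norm (c' t) else 0)"
        unfolding g_def by (auto simp: indicator_def)
      ultimately have hi: "((\<lambda>t. K * norm (c' t)) has_integral r) {0..s1}"
        using has_integral_restrict_UNIV[of "{0..s1}" "\<lambda>t. K * norm (c' t)" r] by simp
      then have ni: "(\<lambda>t. norm (c' t)) integrable_on {0..s1}"
        using K0 integrable_on_cmult_iff[of K "\<lambda>t. norm (c' t)"] by (auto simp: has_integral_integrable)
      have "norm (integral {0..s1} c') \<le> integral {0..s1} (\<lambda>t. norm (c' t))"
        using ftc ni by (intro integral_norm_bound_integral) (auto simp: has_integral_integrable)
      moreover have "integral {0..s1} c' = c s1 - c 0" using ftc by (rule integral_unique)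
      moreover have "r = K * integral {0..s1} (\<lambda>t. norm (c' t))"
        using hi ni by (metis integral_mult_right integral_unique)
      ultimately have "K * norm (c s1 - c 0) \<le> r" using K0 by simp
      then show ?thesis using eq1 r by (simp add: ennreal_leI)
    qed
  qed
  ultimately show ?thesis unfolding K_def by (simp add: mult.commute)
qed

lemma fdist_lb:
  assumes MS: "Metric_space \<Omega> (finsler_dist \<Omega> F)" and pq: "p \<in> \<Omega>" "q \<in> \<Omega>" "p \<noteq> q"
    and L: "\<And>c. c \<in> curves \<Omega> p q \<Longrightarrow> finsler_length F c \<ge> ennreal v"
  shows "finsler_dist \<Omega> F p q \<ge> v"
proof -
  define I where "I = (INF \<gamma>\<in>curves \<Omega> p q. finsler_length F \<gamma>)"
  have Iv: "I \<ge> ennreal v" unfolding I_def using L by (auto intro: INF_greatest)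
  have "finsler_dist \<Omega> F p q \<noteq> 0" using Metric_space.zero[OF MS] pq by auto
  then have "I \<noteq> \<infinity>" unfolding finsler_dist_def I_def[symmetric] by auto
  then obtain r where r: "I = ennreal r" "r \<ge> 0" using ennreal_cases[of I] by auto
  show ?thesis
  proof (cases "v \<ge> 0")
    case True
    then have "v \<le> r" using Iv r by simp
    then show ?thesis unfolding finsler_dist_def I_def[symmetric] using r by simp
  next
    case False
    then show ?thesis using Metric_space.nonneg[OF MS, of p q] by simp
  qed
qed

context
  fixes \<Omega> :: "(complex^'n) set" and F :: "complex^'n \<Rightarrow> complex^'n \<Rightarrow> real" and C2 \<beta> :: real
  assumes fins: "finsler_metric \<Omega> F"
    and H2: "\<forall>z\<in>\<Omega>. \<forall>X. X \<noteq> 0 \<longrightarrow> F z X \<ge> C2 * norm X / (bdist \<Omega> z) powr \<beta>"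
    and C2: "C2 > 0" and \<beta>: "\<beta> > 0"
    and bpos: "\<forall>z\<in>\<Omega>. bdist \<Omega> z > 0"
    and MS: "Metric_space \<Omega> (finsler_dist \<Omega> F)"
begin

lemma dist_global:
  assumes pq: "p \<in> \<Omega>" "q \<in> \<Omega>" and Rb: "Rb > 0" "\<forall>z\<in>\<Omega>. bdist \<Omega> z \<le> Rb"
  shows "finsler_dist \<Omega> F p q \<ge> C2 * norm (p - q) / Rb powr \<beta>"
proof (cases "p = q")
  case True
  then show ?thesis using Metric_space.nonneg[OF MS, of p q] by simp
next
  case False
  show ?thesis
  proof (rule fdist_lb[OF MS pq False])
    fix c assume c: "c \<in> curves \<Omega> p q"
    then have "c ` {0..1} \<subseteq> \<Omega>" "c 0 = p" "c 1 = q" unfolding curves_def by auto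
    then have "\<forall>s\<in>{0..1}. bdist \<Omega> (c s) \<le> Rb" using Rb by auto
    then have "finsler_length F c \<ge> ennreal (C2 * norm (c 1 - c 0) / Rb powr \<beta>)"
      by (intro curve_lb[OF fins H2 C2 \<beta> bpos c]) (use Rb in auto)
    then show "finsler_length F c \<ge> ennreal (C2 * norm (p - q) / Rb powr \<beta>)"
      using \<open>c 0 = p\<close> \<open>c 1 = q\<close> by (simp add: norm_minus_commute)
  qed
qed

lemma dist_local:
  assumes pq: "p \<in> \<Omega>" "q \<in> \<Omega>"
  shows "finsler_dist \<Omega> F p q \<ge> C2 * min (norm (p - q)) (bdist \<Omega> p / 2) / (3 * (bdist \<Omega> p / 2)) powr \<beta>"
proof (cases "p = q")
  case True
  then show ?thesis using Metric_space.nonneg[OF MS, of p q] bpos pq by (auto simp: min_def less_imp_le)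
next
  case False
  define r where "r = bdist \<Omega> p / 2"
  have r0: "r > 0" unfolding r_def using bpos pq by auto
  have pw0: "(3*r) powr \<beta> > 0" using r0 by simp
  show ?thesis unfolding r_def[symmetric]
  proof (rule fdist_lb[OF MS pq False])
    fix c assume c: "c \<in> curves \<Omega> p q"
    then have cin: "c ` {0..1} \<subseteq> \<Omega>" and c0: "c 0 = p" and c1: "c 1 = q"
      and cc: "continuous_on {0..1} c"
      unfolding curves_def piecewise_C1_differentiable_on_def by auto
    define \<phi> where "\<phi> s = norm (c s - p)" for s
    have \<phi>c: "continuous_on {0..1} \<phi>" unfolding \<phi>_def by (intro continuous_intros cc)
    have bd: "bdist \<Omega> (c s) \<le> 2*r + \<phi> s" for s
      using bdist_lip[of \<Omega> "c s" p] unfolding r_def \<phi>_def by simp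
    define T where "T = {s\<in>{0..1}. \<phi> s \<ge> r}"
    show "finsler_length F c \<ge> ennreal (C2 * min (norm (p - q)) r / (3*r) powr \<beta>)"
    proof (cases "T = {}")
      case True
      have "\<forall>s\<in>{0..1}. bdist \<Omega> (c s) \<le> 3*r"
      proof
        fix s :: real assume "s \<in> {0..1}"
        then have "\<phi> s < r" using True unfolding T_def by auto
        then show "bdist \<Omega> (c s) \<le> 3*r" using bd[of s] by simp
      qed
      then have "finsler_length F c \<ge> ennreal (C2 * norm (c 1 - c 0) / (3*r) powr \<beta>)"
        by (intro curve_lb[OF fins H2 C2 \<beta> bpos c]) (use r0 in auto)
      moreover have "C2 * min (norm (p - q)) r / (3*r) powr \<beta> \<le> C2 * norm (c 1 - c 0) / (3*r) powr \<beta>"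
        using c0 c1 C2 pw0 by (intro divide_right_mono mult_left_mono) (auto simp: norm_minus_commute)
      ultimately show ?thesis using order_trans ennreal_leI by blast
    next
      case False
      define s1 where "s1 = Inf T"
      have Tb: "bdd_below T" unfolding T_def by (rule bdd_belowI[where m=0]) auto
      have Tc: "closed T"
      proof -
        have "T = {0..1} \<inter> \<phi> -` {r..}" unfolding T_def by auto
        moreover have "closed ({0..1} \<inter> \<phi> -` {r..})"
          using continuous_closed_preimage[OF \<phi>c closed_atLeastAtMost[of 0 1] closed_atLeast[of r]]
          by (simp add: vimage_def Int_def)
        ultimately show ?thesis by simp
      qed
      have s1T: "s1 \<in> T" unfolding s1_def using closed_contains_Inf[OF False Tb Tc] .
      then have s1in: "s1 \<in> {0..1}" "\<phi> s1 \<ge> r" unfolding T_def by auto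
      have below: "\<phi> s < r" if "s \<in> {0..<s1}" for s
      proof (rule ccontr)
        assume "\<not> \<phi> s < r"
        then have "s \<in> T" unfolding T_def using that s1in by auto
        then have "s1 \<le> s" unfolding s1_def using Tb by (rule cInf_lower)
        then show False using that by auto
      qed
      have "\<phi> 0 = 0" unfolding \<phi>_def using c0 by simp
      then have s1pos: "s1 > 0" using s1in r0 by (cases "s1 = 0") auto
      have clo: "closure {0..<s1} = {0..s1}" using s1pos by (simp add: closure_atLeastLessThan)
      have f1: "continuous_on (closure {0..<s1}) \<phi>"
        unfolding clo using s1in by (auto intro: continuous_on_subset[OF \<phi>c])
      have f2: "s1 \<in> closure {0..<s1}" unfolding clo using s1pos by simp
      have f3: "\<And>x. x \<in> {0..<s1} \<Longrightarrow> \<phi> x \<le> r" using below by fastforce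
      have "\<phi> s1 \<le> r" by (rule continuous_le_on_closure[OF f1 f2 f3])
      have "\<forall>s\<in>{0..s1}. bdist \<Omega> (c s) \<le> 3*r"
      proof
        fix s assume s: "s \<in> {0..s1}"
        have "\<phi> s \<le> r" using below[of s] s \<open>\<phi> s1 \<le> r\<close> by (cases "s = s1") auto
        then show "bdist \<Omega> (c s) \<le> 3*r" using bd[of s] by simp
      qed
      then have "finsler_length F c \<ge> ennreal (C2 * norm (c s1 - c 0) / (3*r) powr \<beta>)"
        by (intro curve_lb[OF fins H2 C2 \<beta> bpos c s1in(1)]) (use r0 in auto)
      moreover have "C2 * min (norm (p - q)) r / (3*r) powr \<beta> \<le> C2 * norm (c s1 - c 0) / (3*r) powr \<beta>"
        using c0 s1in C2 pw0 unfolding \<phi>_def by (intro divide_right_mono mult_left_mono) auto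
      ultimately show ?thesis using order_trans ennreal_leI by blast
    qed
  qed
qed

lemma dist_local2:
  assumes pq: "p \<in> \<Omega>" "q \<in> \<Omega>"
    and small: "finsler_dist \<Omega> F p q < C2 * (bdist \<Omega> p / 2) / (3 * (bdist \<Omega> p / 2)) powr \<beta>"
  shows "norm (p - q) \<le> (3 * (bdist \<Omega> p / 2)) powr \<beta> * finsler_dist \<Omega> F p q / C2"
proof -
  define r where "r = bdist \<Omega> p / 2"
  have r0: "r > 0" unfolding r_def using bpos pq by auto
  have pw0: "(3*r) powr \<beta> > 0" using r0 by simp
  have A: "finsler_dist \<Omega> F p q \<ge> C2 * min (norm (p - q)) r / (3 * r) powr \<beta>"
    using dist_local[OF pq] unfolding r_def .
  have "norm (p - q) < r"
  proof (rule ccontr)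
    assume "\<not> norm (p - q) < r"
    then have "min (norm (p - q)) r = r" by simp
    then show False using A small unfolding r_def[symmetric] by simp
  qed
  then have "finsler_dist \<Omega> F p q \<ge> C2 * norm (p - q) / (3 * r) powr \<beta>" using A by simp
  then have "C2 * norm (p - q) \<le> finsler_dist \<Omega> F p q * (3 * r) powr \<beta>" using pw0 by (simp add: divide_le_eq)
  then show ?thesis unfolding r_def[symmetric] using C2 by (simp add: le_divide_eq mult.commute)
qed

end


definition fourpt :: "'a set \<Rightarrow> ('a \<Rightarrow> 'a \<Rightarrow> real) \<Rightarrow> real \<Rightarrow> bool" where
  "fourpt M d \<delta>0 \<longleftrightarrow> (\<forall>x\<in>M. \<forall>y\<in>M. \<forall>z\<in>M. \<forall>w\<in>M.
        gromov_prod d x y w \<ge> min (gromov_prod d x z w) (gromov_prod d z y w) - \<delta>0)"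

lemma chain_lemma:
  assumes fp: "fourpt M d \<delta>0" and d0: "\<delta>0 \<ge> 0" and w: "w \<in> M"
  shows "\<And>p m. (\<forall>i\<le>m. p i \<in> M) \<Longrightarrow> 1 \<le> m \<Longrightarrow> m \<le> 2^k \<Longrightarrow>
     (\<forall>i<m. gromov_prod d (p i) (p (Suc i)) w \<ge> \<mu>) \<Longrightarrow> gromov_prod d (p 0) (p m) w \<ge> \<mu> - real k * \<delta>0"
proof (induction k)
  case 0
  then have "m = 1" by simp
  then show ?case using 0 by simp
next
  case (Suc k)
  show ?case
  proof (cases "m = 1")
    case True
    have "0 \<le> (1 + real k) * \<delta>0" using d0 by simp
    then show ?thesis using Suc.prems True by simp
  next
    case False
    define h where "h = m div 2"
    have h1: "1 \<le> h" "h \<le> 2^k" "m - h \<le> 2^k" "1 \<le> m - h" "h \<le> m"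
      using False Suc.prems unfolding h_def by auto
    have A: "gromov_prod d (p 0) (p h) w \<ge> \<mu> - real k * \<delta>0"
      using Suc.IH[of h p] Suc.prems h1 by auto
    have B: "gromov_prod d (p (h + 0)) (p (h + (m - h))) w \<ge> \<mu> - real k * \<delta>0"
      apply (rule Suc.IH[of "m - h" "\<lambda>i. p (h + i)"])
      using Suc.prems h1 by auto
    have "gromov_prod d (p 0) (p m) w \<ge> min (gromov_prod d (p 0) (p h) w) (gromov_prod d (p h) (p m) w) - \<delta>0"
      using fp w Suc.prems h1 unfolding fourpt_def by auto
    then show ?thesis using A B h1 by (auto simp: algebra_simps)
  qed
qed

definition D0c :: "real \<Rightarrow> real \<Rightarrow> real" where
  "D0c lam \<delta>0 = 4 + 2*\<delta>0 + 2*\<delta>0*(4 + ln (16*lam^2*\<delta>0/ln 2 + 1))/ln 2"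

lemma D0c_bound:
  fixes Dm lam \<delta>0 :: real
  assumes "Dm \<ge> 0" "\<delta>0 \<ge> 0" "lam \<ge> 1"
    and H: "Dm \<le> 3/2 + \<delta>0 * (log 2 (8*lam^2*(Dm+1) + 4) + 1)"
  shows "Dm \<le> D0c lam \<delta>0"
proof -
  define M where "M = 16*lam^2*\<delta>0/ln 2 + 1"
  define Y where "Y = 8*lam^2*(Dm+1) + 4"
  have l2: "ln 2 > (0::real)" by simp
  have M1: "M \<ge> 1" unfolding M_def using assms l2 by simp
  have Y0: "Y > 0" unfolding Y_def using assms by (simp add: add_pos_nonneg)
  have "ln (Y/M) \<le> Y/M - 1" using Y0 M1 by (intro ln_le_minus_one) simp
  then have lnY: "ln Y \<le> Y/M + ln M" using Y0 M1 by (simp add: ln_div)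
  have "\<delta>0 * log 2 Y = \<delta>0 * ln Y / ln 2" by (simp add: log_def)
  also have "\<dots> \<le> \<delta>0 * (Y/M + ln M) / ln 2"
    using lnY assms l2 by (intro divide_right_mono mult_left_mono) auto
  also have "\<dots> = \<delta>0 * (8*lam^2*(Dm+1)) / (M * ln 2) + \<delta>0 * 4 / (M * ln 2) + \<delta>0 * ln M / ln 2"
    unfolding Y_def using M1 by (simp add: field_simps)
  also have "\<delta>0 * (8*lam^2*(Dm+1)) / (M * ln 2) \<le> (Dm + 1)/2"
  proof -
    have "M * ln 2 = 16*lam^2*\<delta>0 + ln 2" unfolding M_def using l2 by (simp add: field_simps)
    then have "M * ln 2 \<ge> 16*lam^2*\<delta>0" using l2 by simp
    moreover have "M * ln 2 > 0" using M1 l2 by simp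
    ultimately have "(Dm+1)/2 * (16*lam^2*\<delta>0) \<le> (Dm+1)/2 * (M*ln 2)"
      using assms by (intro mult_left_mono) auto
    moreover have "(Dm+1)/2 * (16*lam^2*\<delta>0) = \<delta>0 * (8*lam^2*(Dm+1))" by (simp add: algebra_simps)
    ultimately show ?thesis using \<open>M * ln 2 > 0\<close> by (simp add: divide_le_eq mult.commute)
  qed
  also have "\<delta>0 * 4 / (M * ln 2) \<le> \<delta>0 * 4 / ln 2"
    using M1 l2 assms by (intro divide_left_mono) auto
  finally have "\<delta>0 * log 2 Y \<le> (Dm+1)/2 + \<delta>0 * 4 / ln 2 + \<delta>0 * ln M / ln 2" by simp
  then have hh: "Dm \<le> 3/2 + \<delta>0 + (Dm+1)/2 + \<delta>0 * 4 / ln 2 + \<delta>0 * ln M / ln 2"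
    using H unfolding Y_def by (simp add: algebra_simps)
  define A where "A = \<delta>0 * 4 / ln 2"
  define B where "B = \<delta>0 * ln M / ln 2"
  have h2: "Dm \<le> 3/2 + \<delta>0 + (Dm/2 + 1/2) + A + B" using hh unfolding A_def B_def by (simp add: add_divide_distrib)
  have h3: "2*\<delta>0*(4 + ln M)/ln 2 = 2*A + 2*B" unfolding A_def B_def by (simp add: field_simps)
  have "Dm \<le> 4 + 2 * \<delta>0 + 2 * \<delta>0 * (4 + ln M) / ln 2" unfolding h3 using h2 by linarith
  then show ?thesis unfolding D0c_def M_def[symmetric] .
qed

lemma D0c_nonneg: assumes "\<delta>0 \<ge> 0" "lam \<ge> 1" shows "D0c lam \<delta>0 \<ge> 0"
proof -
  have "16*lam^2*\<delta>0/ln 2 \<ge> 0" using assms by simp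
  then have "ln (16*lam^2*\<delta>0/ln 2 + 1) \<ge> 0" by simp
  then show ?thesis unfolding D0c_def using assms by simp
qed

definition Hc :: "real \<Rightarrow> real \<Rightarrow> real" where
  "Hc lam \<delta>0 = lam^2 * (2*(D0c lam \<delta>0 + 1) + 1) + D0c lam \<delta>0 + 1"

lemma gp2: "gromov_prod d x y w = (d x w + d y w - d x y) / 2" by (simp add: gromov_prod_def)
lemma gp2': "2 * gromov_prod d x y w = d x w + d y w - d x y" by (simp add: gromov_prod_def)

lemma gp_base_lip:
  assumes MS: "Metric_space M d" and "x \<in> M" "y \<in> M" "z \<in> M" "w \<in> M"
  shows "gromov_prod d x y z \<le> gromov_prod d x y w + d w z"
proof -
  have "d x z \<le> d x w + d w z" "d y z \<le> d y w + d w z"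
    using assms Metric_space.triangle[OF MS] by auto
  then show ?thesis using gp2'[of d x y z] gp2'[of d x y w] by linarith
qed

lemma close_pts:
  assumes MS: "Metric_space M d" and fp: "fourpt M d \<delta>0"
    and M: "x \<in> M" "y \<in> M" "z \<in> M" "z' \<in> M"
    and h1: "gromov_prod d x y z \<le> H" and h2: "gromov_prod d x y z' \<le> H"
  shows "d z z' \<le> \<bar>d x z - d x z'\<bar> + 2*H + 2*\<delta>0"
proof -
  have c: "d u v = d v u" for u v using Metric_space.commute[OF MS] by auto
  have f: "gromov_prod d z z' x \<ge> min (gromov_prod d z y x) (gromov_prod d y z' x) - \<delta>0"
    using fp M unfolding fourpt_def by auto
  have a1: "gromov_prod d z y x \<ge> d x z - H"
    using gp2'[of d z y x] gp2'[of d x y z] h1 c[of z x] c[of y x] c[of y z] by linarith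
  have a2: "gromov_prod d y z' x \<ge> d x z' - H"
    using gp2'[of d y z' x] gp2'[of d x y z'] h2 c[of z' x] c[of y x] c[of y z'] by linarith
  have "d z z' = d x z + d x z' - 2 * gromov_prod d z z' x"
    using gp2'[of d z z' x] c[of z x] c[of z' x] by linarith
  then show ?thesis using f a1 a2 by (cases "d x z \<le> d x z'") (auto simp: min_def split: if_splits)
qed

context
  fixes M d \<delta>0 lam \<gamma> a b g
  assumes MS: "Metric_space M d" and fp: "fourpt M d \<delta>0" and d0: "\<delta>0 \<ge> 0"
    and lam: "lam \<ge> 1" and qg: "quasi_geodesic M d lam \<gamma> {a..b}" and ab: "a \<le> b"
    and gM: "g ` {0..d (\<gamma> a) (\<gamma> b)} \<subseteq> M" and g0: "g 0 = \<gamma> a" and gD: "g (d (\<gamma> a) (\<gamma> b)) = \<gamma> b"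
    and giso: "\<forall>s\<in>{0..d (\<gamma> a) (\<gamma> b)}. \<forall>t\<in>{0..d (\<gamma> a) (\<gamma> b)}. d (g s) (g t) = \<bar>s - t\<bar>"
begin

lemma gamM: "t \<in> {a..b} \<Longrightarrow> \<gamma> t \<in> M" using qg unfolding quasi_geodesic_def by auto

lemma gam_up: "s \<in> {a..b} \<Longrightarrow> t \<in> {a..b} \<Longrightarrow> d (\<gamma> t) (\<gamma> s) \<le> lam * \<bar>t - s\<bar>"
  using qg unfolding quasi_geodesic_def by auto

lemma gam_lo: "s \<in> {a..b} \<Longrightarrow> t \<in> {a..b} \<Longrightarrow> \<bar>t - s\<bar> \<le> lam * d (\<gamma> t) (\<gamma> s)"
proof -
  assume "s \<in> {a..b}" "t \<in> {a..b}"
  then have "\<bar>t - s\<bar> / lam \<le> d (\<gamma> t) (\<gamma> s)" using qg unfolding quasi_geodesic_def by auto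
  then show ?thesis using lam by (simp add: divide_le_eq mult.commute)
qed

lemma gM': "r \<in> {0..d (\<gamma> a) (\<gamma> b)} \<Longrightarrow> g r \<in> M" using gM by auto

lemma gd: "r \<in> {0..d (\<gamma> a) (\<gamma> b)} \<Longrightarrow> s \<in> {0..d (\<gamma> a) (\<gamma> b)} \<Longrightarrow> d (g r) (g s) = \<bar>r - s\<bar>"
  using giso by auto

lemma dtri: "x \<in> M \<Longrightarrow> y \<in> M \<Longrightarrow> z \<in> M \<Longrightarrow> d x z \<le> d x y + d y z"
  using Metric_space.triangle[OF MS] by auto

lemma dcom: "d x y = d y x" using Metric_space.commute[OF MS] by auto

lemma dnn: "0 \<le> d x y" using Metric_space.nonneg[OF MS] by auto

lemma dzero: "x \<in> M \<Longrightarrow> d x x = 0" using Metric_space.zero[OF MS] by auto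

lemma step1: "\<forall>r\<in>{0..d (\<gamma> a) (\<gamma> b)}. \<exists>t\<in>{a..b}. d (g r) (\<gamma> t) \<le> D0c lam \<delta>0 + 1"
proof -
  define D where "D = d (\<gamma> a) (\<gamma> b)"
  have D0: "D \<ge> 0" unfolding D_def by (rule dnn)
  define \<rho> where "\<rho> w = Inf ((\<lambda>t. d w (\<gamma> t)) ` {a..b})" for w
  have bddb: "bdd_below ((\<lambda>t. d w (\<gamma> t)) ` {a..b})" for w
    by (rule bdd_belowI[where m=0]) (auto simp: dnn)
  have ne: "(\<lambda>t. d w (\<gamma> t)) ` {a..b} \<noteq> {}" for w using ab by auto
  have \<rho>_le: "\<rho> w \<le> d w (\<gamma> t)" if "t \<in> {a..b}" for w t
    unfolding \<rho>_def using that bddb by (intro cInf_lower) auto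
  have \<rho>_nn: "0 \<le> \<rho> w" for w
    unfolding \<rho>_def using ne by (intro cInf_greatest) (auto simp: dnn)
  have \<rho>_ex: "\<exists>t\<in>{a..b}. d w (\<gamma> t) < \<rho> w + 1" for w
  proof -
    have "Inf ((\<lambda>t. d w (\<gamma> t)) ` {a..b}) < \<rho> w + 1" unfolding \<rho>_def by simp
    then show ?thesis using cInf_less_iff[OF ne bddb] by auto
  qed
  define Dm where "Dm = Sup ((\<lambda>r. \<rho> (g r)) ` {0..D})"
  have bdda: "bdd_above ((\<lambda>r. \<rho> (g r)) ` {0..D})"
  proof (rule bdd_aboveI[where M=D])
    fix v assume "v \<in> (\<lambda>r. \<rho> (g r)) ` {0..D}"
    then obtain r where r: "r \<in> {0..D}" "v = \<rho> (g r)" by auto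
    have "v \<le> d (g r) (\<gamma> a)" using r \<rho>_le ab by auto
    also have "\<dots> = d (g r) (g 0)" using g0 by simp
    also have "\<dots> = \<bar>r - 0\<bar>" using gd r D0 unfolding D_def by auto
    finally show "v \<le> D" using r by auto
  qed
  have neD: "(\<lambda>r. \<rho> (g r)) ` {0..D} \<noteq> {}" using D0 by auto
  have Dm_ge: "\<rho> (g r) \<le> Dm" if "r \<in> {0..D}" for r
    unfolding Dm_def using that bdda by (intro cSup_upper) auto
  have Dm0: "Dm \<ge> 0" using Dm_ge[of 0] \<rho>_nn[of "g 0"] D0 by auto
  obtain r0 where r0: "r0 \<in> {0..D}" "\<rho> (g r0) > Dm - 1"
  proof -
    have "Dm - 1 < Sup ((\<lambda>r. \<rho> (g r)) ` {0..D})" unfolding Dm_def[symmetric] by simp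
    then show ?thesis using less_cSup_iff[OF neD bdda] that by auto
  qed
  have main: "Dm \<le> 3/2 + \<delta>0 * (log 2 (8*lam^2*(Dm+1) + 4) + 1)"
  proof -
    define Q where "Q = Dm + 1"
    have Q1: "Q \<ge> 1" unfolding Q_def using Dm0 by simp
    define x0 where "x0 = g r0"
    have x0M: "x0 \<in> M" unfolding x0_def using gM' r0 unfolding D_def by auto
    define ry where "ry = max 0 (r0 - 3*Q)"
    define rz where "rz = min D (r0 + 3*Q)"
    have ryz: "ry \<in> {0..D}" "rz \<in> {0..D}" "ry \<le> r0" "r0 \<le> rz" "rz - ry \<le> 6*Q"
      unfolding ry_def rz_def using r0 Q1 by auto
    have far: "d x0 (\<gamma> t) > Dm - 1" if "t \<in> {a..b}" for t
      using \<rho>_le[OF that, of x0] r0 unfolding x0_def by auto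
    obtain sy where sy: "sy \<in> {a..b}" "d (g ry) (\<gamma> sy) \<le> Q" "ry = 0 \<Longrightarrow> sy = a"
    proof (cases "ry = 0")
      case True
      then show ?thesis using that[of a] ab g0 dzero[of "\<gamma> a"] gamM[of a] Q1 by auto
    next
      case False
      obtain t where "t \<in> {a..b}" "d (g ry) (\<gamma> t) < \<rho> (g ry) + 1" using \<rho>_ex by blast
      moreover have "\<rho> (g ry) \<le> Dm" using Dm_ge ryz by auto
      ultimately show ?thesis using that[of t] False unfolding Q_def by auto
    qed
    obtain sz where sz: "sz \<in> {a..b}" "d (g rz) (\<gamma> sz) \<le> Q" "rz = D \<Longrightarrow> sz = b"
    proof (cases "rz = D")
      case True
      then show ?thesis using that[of b] ab gD dzero[of "\<gamma> b"] gamM[of b] Q1 unfolding D_def by auto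
    next
      case False
      obtain t where "t \<in> {a..b}" "d (g rz) (\<gamma> t) < \<rho> (g rz) + 1" using \<rho>_ex by blast
      moreover have "\<rho> (g rz) \<le> Dm" using Dm_ge ryz by auto
      ultimately show ?thesis using that[of t] False unfolding Q_def by auto
    qed
    have gyM: "g ry \<in> M" "g rz \<in> M" using gM' ryz unfolding D_def by auto
    have "d (\<gamma> sz) (\<gamma> sy) \<le> d (\<gamma> sz) (g rz) + d (g rz) (\<gamma> sy)"
      using dtri gamM sy sz gyM by auto
    also have "\<dots> \<le> d (\<gamma> sz) (g rz) + (d (g rz) (g ry) + d (g ry) (\<gamma> sy))"
      using dtri gamM sy sz gyM by auto
    also have "d (g rz) (g ry) = \<bar>rz - ry\<bar>" using gd ryz unfolding D_def by auto
    finally have "d (\<gamma> sz) (\<gamma> sy) \<le> 8 * Q" using sy sz ryz dcom[of "\<gamma> sz" "g rz"] Q1 by auto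
    then have szy: "\<bar>sz - sy\<bar> \<le> lam * (8 * Q)"
      using gam_lo[OF sy(1) sz(1)] lam by (smt (verit) mult_left_mono)
    define N where "N = nat \<lceil>8*lam^2*Q\<rceil> + 1"
    have N1: "N \<ge> 1" unfolding N_def by simp
    have NQ: "real N \<ge> 8*lam^2*Q" unfolding N_def by linarith
    have NQ2: "real N \<le> 8*lam^2*Q + 2" unfolding N_def using Q1 by (simp add: of_nat_nat) linarith
    define s where "s i = sy + (real i - 1) * (sz - sy) / real N" for i :: nat
    have s_in: "s i \<in> {a..b}" if "1 \<le> i" "i \<le> N + 1" for i
    proof -
      define \<theta> where "\<theta> = (real i - 1) / real N"
      have th: "0 \<le> \<theta>" "\<theta> \<le> 1" unfolding \<theta>_def using that N1 by auto
      have "s i = (1 - \<theta>) * sy + \<theta> * sz" unfolding s_def \<theta>_def using N1 by (simp add: field_simps)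
      moreover have "(1 - \<theta>) * sy + \<theta> * sz \<ge> (1 - \<theta>) * a + \<theta> * a"
        using th sy sz by (intro add_mono mult_left_mono) auto
      moreover have "(1 - \<theta>) * sy + \<theta> * sz \<le> (1 - \<theta>) * b + \<theta> * b"
        using th sy sz by (intro add_mono mult_left_mono) auto
      ultimately show ?thesis by (simp add: algebra_simps)
    qed
    have s1: "s 1 = sy" unfolding s_def by simp
    have sN: "s (N+1) = sz" unfolding s_def using N1 by simp
    have sstep: "\<bar>s (Suc i) - s i\<bar> = \<bar>sz - sy\<bar> / real N" for i
    proof -
      have "s (Suc i) - s i = (sz - sy) / real N" unfolding s_def using N1 by (simp add: field_simps)
      then show ?thesis by simp
    qed
    define p where "p i = (if i = 0 then g ry else if i \<le> N + 1 then \<gamma> (s i) else g rz)" for i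
    have pM: "\<forall>i\<le>N+2. p i \<in> M" unfolding p_def using gyM gamM s_in by auto
    have lowb: "Dm - 3/2 \<le> gromov_prod d u v x0"
      if "u \<in> M" "v \<in> M" "d u v \<le> 1" "d u x0 > Dm - 1" "d v x0 > Dm - 1" for u v
      using gp2'[of d u v x0] that by linarith
    have cons: "\<forall>i<N+2. gromov_prod d (p i) (p (Suc i)) x0 \<ge> Dm - 3/2"
    proof (intro allI impI)
      fix i assume i: "i < N + 2"
      consider "i = 0" | "1 \<le> i" "i \<le> N" | "i = N + 1" using i by linarith
      then show "gromov_prod d (p i) (p (Suc i)) x0 \<ge> Dm - 3/2"
      proof cases
        case 1
        then have pp: "p i = g ry" "p (Suc i) = \<gamma> sy" unfolding p_def using s1 by auto
        show ?thesis
        proof (cases "ry = 0")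
          case True
          then have "p (Suc i) = p i" using pp sy g0 by auto
          moreover have "d (p i) x0 > Dm - 1" using far[of a] ab pp True g0 dcom by auto
          ultimately show ?thesis using gp2'[of d "p i" "p i" x0] dzero[of "p i"] pM i
            by (simp add: gromov_prod_def)
        next
          case False
          then have "ry = r0 - 3*Q" unfolding ry_def by auto
          then have "d (p i) x0 = 3*Q" using pp gd ryz r0 unfolding x0_def D_def by auto
          moreover have "d (p (Suc i)) x0 > Dm - 1" using far[OF sy(1)] pp dcom by auto
          moreover have "d (p i) (p (Suc i)) \<le> Q" using pp sy by auto
          ultimately show ?thesis using gp2'[of d "p i" "p (Suc i)" x0] Dm0 Q_def by linarith
        qed
      next
        case 2
        then have pp: "p i = \<gamma> (s i)" "p (Suc i) = \<gamma> (s (Suc i))" unfolding p_def by auto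
        have si: "s i \<in> {a..b}" "s (Suc i) \<in> {a..b}" using s_in 2 by auto
        have "d (p i) (p (Suc i)) \<le> lam * \<bar>s i - s (Suc i)\<bar>" using gam_up[OF si(2) si(1)] pp by simp
        also have "\<dots> = lam * (\<bar>sz - sy\<bar> / real N)" using sstep[of i] by (simp add: abs_minus_commute)
        also have "\<dots> \<le> lam * (lam * (8*Q) / real N)"
          using szy lam N1 by (intro mult_left_mono divide_right_mono) auto
        also have "\<dots> = (8*lam^2*Q) / real N" by (simp add: power2_eq_square)
        also have "\<dots> \<le> 1" using NQ N1 by simp
        finally have "d (p i) (p (Suc i)) \<le> 1" .
        moreover have "d (p i) x0 > Dm - 1" "d (p (Suc i)) x0 > Dm - 1"
          using far si pp dcom by auto
        ultimately show ?thesis using lowb pM i by (metis Suc_leI less_imp_le_nat i)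
      next
        case 3
        then have pp: "p i = \<gamma> sz" "p (Suc i) = g rz" unfolding p_def using sN by auto
        show ?thesis
        proof (cases "rz = D")
          case True
          then have "p (Suc i) = p i" using pp sz gD unfolding D_def by auto
          moreover have "d (p i) x0 > Dm - 1" using far[OF sz(1)] pp dcom by auto
          ultimately show ?thesis using gp2'[of d "p i" "p i" x0] dzero[of "p i"] pM i
            by (simp add: gromov_prod_def)
        next
          case False
          then have "rz = r0 + 3*Q" unfolding rz_def by auto
          then have "d (p (Suc i)) x0 = 3*Q" using pp gd ryz r0 unfolding x0_def D_def by auto
          moreover have "d (p i) x0 > Dm - 1" using far[OF sz(1)] pp dcom by auto
          moreover have "d (p i) (p (Suc i)) \<le> Q" using pp sz dcom by auto
          ultimately show ?thesis using gp2'[of d "p i" "p (Suc i)" x0] Dm0 Q_def by linarith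
        qed
      qed
    qed
    define Y where "Y = 8*lam^2*Q + 4"
    have Y1: "Y \<ge> 1" unfolding Y_def using Q1 by simp
    define k where "k = nat \<lceil>log 2 Y\<rceil>"
    have logY: "log 2 Y \<ge> 0" using Y1 by simp
    have kle: "real k \<le> log 2 Y + 1" unfolding k_def using logY by linarith
    have "real (N + 2) \<le> Y" using NQ2 unfolding Y_def by simp
    also have "Y = 2 powr (log 2 Y)" using Y1 by simp
    also have "\<dots> \<le> 2 powr (real k)" unfolding k_def using logY by (intro powr_mono) auto
    also have "\<dots> = 2 ^ k" by (simp add: powr_realpow)
    finally have "real (N + 2) \<le> 2 ^ k" .
    then have Nk: "N + 2 \<le> 2 ^ k" by (metis of_nat_le_iff of_nat_numeral of_nat_power)
    have ch: "gromov_prod d (p 0) (p (N+2)) x0 \<ge> (Dm - 3/2) - real k * \<delta>0"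
      by (rule chain_lemma[OF fp d0 x0M pM _ Nk cons]) simp
    have "p 0 = g ry" "p (N+2) = g rz" unfolding p_def by auto
    then have "gromov_prod d (p 0) (p (N+2)) x0 = 0"
      using gd ryz r0 gp2[of d "g ry" "g rz" "g r0"] unfolding x0_def D_def by auto
    then have "Dm \<le> 3/2 + real k * \<delta>0" using ch by linarith
    also have "\<dots> \<le> 3/2 + (log 2 Y + 1) * \<delta>0" using kle d0 by (simp add: mult_right_mono)
    finally show ?thesis unfolding Y_def Q_def by (simp add: algebra_simps)
  qed
  have DmD: "Dm \<le> D0c lam \<delta>0" by (rule D0c_bound[OF Dm0 d0 lam main])
  show ?thesis
  proof
    fix r assume r: "r \<in> {0..d (\<gamma> a) (\<gamma> b)}"
    obtain t where "t \<in> {a..b}" "d (g r) (\<gamma> t) < \<rho> (g r) + 1" using \<rho>_ex by blast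
    moreover have "\<rho> (g r) \<le> Dm" using Dm_ge r unfolding D_def by auto
    ultimately show "\<exists>t\<in>{a..b}. d (g r) (\<gamma> t) \<le> D0c lam \<delta>0 + 1" using DmD by force
  qed
qed

lemma step2:
  assumes t0: "t0 \<in> {a..b}"
  shows "gromov_prod d (\<gamma> a) (\<gamma> b) (\<gamma> t0) \<le> Hc lam \<delta>0"
proof -
  define D where "D = d (\<gamma> a) (\<gamma> b)"
  have D0: "D \<ge> 0" unfolding D_def by (rule dnn)
  define Q where "Q = D0c lam \<delta>0 + 1"
  have Q0: "Q \<ge> 0" unfolding Q_def using D0c_nonneg[OF d0 lam] by simp
  have S1: "\<forall>r\<in>{0..D}. \<exists>t\<in>{a..b}. d (g r) (\<gamma> t) \<le> Q" using step1 unfolding D_def Q_def .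
  define Mg where "Mg = nat \<lceil>D\<rceil> + 1"
  have Mg1: "Mg \<ge> 1" unfolding Mg_def by simp
  have MgD: "real Mg \<ge> D" unfolding Mg_def by linarith
  define rr where "rr j = real j * D / real Mg" for j :: nat
  have rr_in: "rr j \<in> {0..D}" if "j \<le> Mg" for j
  proof -
    have "real j * D \<le> real Mg * D" using that D0 by (intro mult_right_mono) auto
    then show ?thesis unfolding rr_def using Mg1 D0 by (auto simp: divide_le_eq mult.commute)
  qed
  have rr0: "rr 0 = 0" and rrM: "rr Mg = D" unfolding rr_def using Mg1 by auto
  have rrstep: "rr (Suc j) - rr j \<le> 1" for j
  proof -
    have "rr (Suc j) - rr j = D / real Mg" unfolding rr_def using Mg1 by (simp add: field_simps)
    also have "\<dots> \<le> 1" using MgD Mg1 by simp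
    finally show ?thesis .
  qed
  have "\<forall>j. \<exists>s. j \<le> Mg \<longrightarrow> s \<in> {a..b} \<and> d (g (rr j)) (\<gamma> s) \<le> Q \<and> (j = 0 \<longrightarrow> s = a) \<and> (j = Mg \<longrightarrow> s = b)"
  proof
    fix j
    show "\<exists>s. j \<le> Mg \<longrightarrow> s \<in> {a..b} \<and> d (g (rr j)) (\<gamma> s) \<le> Q \<and> (j = 0 \<longrightarrow> s = a) \<and> (j = Mg \<longrightarrow> s = b)"
    proof (cases "j = 0")
      case True
      then show ?thesis using rr0 g0 dzero[of "\<gamma> a"] gamM[of a] ab Q0 Mg1 by (intro exI[of _ a]) auto
    next
      case False
      show ?thesis
      proof (cases "j = Mg")
        case True
        then show ?thesis using False rrM gD dzero[of "\<gamma> b"] gamM[of b] ab Q0 unfolding D_def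
          by (intro exI[of _ b]) auto
      next
        case False2: False
        show ?thesis
        proof (cases "j \<le> Mg")
          case True
          then obtain t where "t \<in> {a..b}" "d (g (rr j)) (\<gamma> t) \<le> Q" using S1 rr_in by blast
          then show ?thesis using False False2 by (intro exI[of _ t]) auto
        qed auto
      qed
    qed
  qed
  then obtain sf where sf: "\<And>j. j \<le> Mg \<Longrightarrow> sf j \<in> {a..b} \<and> d (g (rr j)) (\<gamma> (sf j)) \<le> Q \<and> (j = 0 \<longrightarrow> sf j = a) \<and> (j = Mg \<longrightarrow> sf j = b)"
    by metis
  define Jset where "Jset = {j. j \<le> Mg \<and> sf j \<le> t0}"
  have finJ: "finite Jset" unfolding Jset_def by auto
  have J0: "0 \<in> Jset" unfolding Jset_def using sf[of 0] t0 by auto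
  define J where "J = Max Jset"
  have JJ: "J \<in> Jset" unfolding J_def using finJ J0 by (intro Max_in) auto
  have Jmax: "j \<le> J" if "j \<in> Jset" for j unfolding J_def using finJ that by auto
  have JM: "J \<le> Mg" "sf J \<le> t0" using JJ unfolding Jset_def by auto
  have sfJ: "sf J \<in> {a..b}" "d (g (rr J)) (\<gamma> (sf J)) \<le> Q" using sf JM by auto
  have gJM: "g (rr J) \<in> M" using gM' rr_in JM unfolding D_def by auto
  have t0M: "\<gamma> t0 \<in> M" using gamM t0 by auto
  have close: "d (g (rr J)) (\<gamma> t0) \<le> lam^2 * (2*Q + 1) + Q"
  proof (cases "J = Mg")
    case True
    then have "sf J = b" using sf[of J] JM by auto
    then have "t0 = b" using JM t0 by auto
    then have "d (g (rr J)) (\<gamma> t0) \<le> Q" using sfJ \<open>sf J = b\<close> by auto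
    moreover have "lam^2 * (2*Q + 1) \<ge> 0" using Q0 by simp
    ultimately show ?thesis by linarith
  next
    case False
    then have JM': "Suc J \<le> Mg" using JM by auto
    have sfJ1: "sf (Suc J) \<in> {a..b}" "d (g (rr (Suc J))) (\<gamma> (sf (Suc J))) \<le> Q" using sf JM' by auto
    have "sf (Suc J) > t0"
    proof (rule ccontr)
      assume "\<not> sf (Suc J) > t0"
      then have "Suc J \<in> Jset" unfolding Jset_def using JM' by auto
      then show False using Jmax by fastforce
    qed
    have gJ1M: "g (rr (Suc J)) \<in> M" using gM' rr_in JM' unfolding D_def by auto
    have "d (\<gamma> (sf J)) (\<gamma> (sf (Suc J))) \<le> d (\<gamma> (sf J)) (g (rr J)) + d (g (rr J)) (\<gamma> (sf (Suc J)))"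
      using dtri gamM sfJ sfJ1 gJM by auto
    also have "\<dots> \<le> d (\<gamma> (sf J)) (g (rr J)) + (d (g (rr J)) (g (rr (Suc J))) + d (g (rr (Suc J))) (\<gamma> (sf (Suc J))))"
      using dtri gamM sfJ sfJ1 gJM gJ1M by auto
    also have "d (g (rr J)) (g (rr (Suc J))) = \<bar>rr J - rr (Suc J)\<bar>" using gd rr_in JM JM' unfolding D_def by auto
    also have "\<bar>rr J - rr (Suc J)\<bar> \<le> 1" using rrstep[of J] rr_in JM JM'
      by (smt (verit) divide_nonneg_nonneg mult_nonneg_nonneg of_nat_0_le_iff of_nat_Suc rr_def D0 Mg1
          divide_right_mono mult_right_mono)
    finally have "d (\<gamma> (sf J)) (\<gamma> (sf (Suc J))) \<le> 2*Q + 1" using sfJ sfJ1 dcom[of "\<gamma> (sf J)" "g (rr J)"] by linarith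
    then have "sf (Suc J) - sf J \<le> lam * (2*Q + 1)"
      using gam_lo[OF sfJ(1) sfJ1(1)] lam dcom[of "\<gamma> (sf (Suc J))" "\<gamma> (sf J)"] by (smt (verit) mult_left_mono)
    then have "\<bar>t0 - sf J\<bar> \<le> lam * (2*Q + 1)" using JM \<open>sf (Suc J) > t0\<close> by auto
    then have "d (\<gamma> t0) (\<gamma> (sf J)) \<le> lam * (lam * (2*Q + 1))"
      using gam_up[OF sfJ(1) t0] lam by (smt (verit) mult_left_mono)
    then have "d (\<gamma> t0) (\<gamma> (sf J)) \<le> lam^2 * (2*Q + 1)" by (simp add: power2_eq_square mult.assoc)
    moreover have "d (g (rr J)) (\<gamma> t0) \<le> d (g (rr J)) (\<gamma> (sf J)) + d (\<gamma> (sf J)) (\<gamma> t0)"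
      using dtri gJM gamM sfJ t0 by auto
    ultimately show ?thesis using sfJ dcom[of "\<gamma> t0" "\<gamma> (sf J)"] by linarith
  qed
  have "gromov_prod d (\<gamma> a) (\<gamma> b) (\<gamma> t0) \<le> gromov_prod d (\<gamma> a) (\<gamma> b) (g (rr J)) + d (g (rr J)) (\<gamma> t0)"
    using gp_base_lip[OF MS] gamM ab t0 gJM by auto
  moreover have "gromov_prod d (\<gamma> a) (\<gamma> b) (g (rr J)) = 0"
  proof -
    have r: "rr J \<in> {0..D}" using rr_in JM by auto
    have "d (\<gamma> a) (g (rr J)) = rr J" using gd[of 0 "rr J"] g0 r D0 unfolding D_def by auto
    moreover have "d (\<gamma> b) (g (rr J)) = D - rr J" using gd[of D "rr J"] gD r D0 unfolding D_def by auto
    ultimately show ?thesis unfolding gp2 D_def by simp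
  qed
  ultimately show ?thesis using close unfolding Hc_def Q_def by linarith
qed

end


lemma geo_two_sided:
  fixes q :: real
  assumes q: "0 < q" "q < 1"
  shows "(\<Sum>k<N. q ^ (if k0 \<le> k then k - k0 else k0 - k)) \<le> 2 / (1 - q)"
proof -
  define g where "g k = q ^ (if k0 \<le> k then k - k0 else k0 - k)" for k
  have gn: "g k \<ge> 0" for k unfolding g_def using q by simp
  have split: "{..<N} = ({..<N} \<inter> {k0..}) \<union> ({..<N} \<inter> {..<k0})" by auto
  have "(\<Sum>k<N. g k) = (\<Sum>k\<in>{..<N} \<inter> {k0..}. g k) + (\<Sum>k\<in>{..<N} \<inter> {..<k0}. g k)"
    by (subst split, rule sum.union_disjoint) auto
  also have "(\<Sum>k\<in>{..<N} \<inter> {k0..}. g k) \<le> 1 / (1 - q)"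
  proof -
    have "(\<Sum>k\<in>{..<N} \<inter> {k0..}. g k) = (\<Sum>k\<in>{k0..<N}. q ^ (k - k0))"
      by (rule sum.cong) (auto simp: g_def)
    also have "\<dots> = (\<Sum>j\<in>{0..<N - k0}. q ^ j)"
    proof (cases "k0 \<le> N")
      case True
      then show ?thesis
        using sum.shift_bounds_nat_ivl[of "\<lambda>k. q ^ (k - k0)" 0 k0 "N - k0"] by simp
    next
      case False
      then show ?thesis by simp
    qed
    also have "\<dots> = (1 - q ^ (N - k0)) / (1 - q)"
      using q by (simp add: sum_gp_strict atLeast0LessThan)
    also have "\<dots> \<le> 1 / (1 - q)" using q by (intro divide_right_mono) auto
    finally show ?thesis .
  qed
  also have "(\<Sum>k\<in>{..<N} \<inter> {..<k0}. g k) \<le> 1 / (1 - q)"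
  proof -
    have "(\<Sum>k\<in>{..<N} \<inter> {..<k0}. g k) \<le> (\<Sum>k<k0. g k)"
      using gn by (intro sum_mono2) auto
    also have "(\<Sum>k<k0. g k) = (\<Sum>k<k0. q ^ Suc (k0 - Suc k))"
      by (rule sum.cong) (auto simp: g_def Suc_diff_Suc)
    also have "\<dots> = (\<Sum>k<k0. q ^ Suc k)"
      by (rule sum.nat_diff_reindex)
    also have "\<dots> = q * (\<Sum>k<k0. q ^ k)" by (simp add: sum_distrib_left)
    also have "\<dots> = q * ((1 - q ^ k0) / (1 - q))" using q by (simp add: sum_gp_strict)
    also have "\<dots> \<le> 1 * (1 / (1 - q))"
    proof -
      have "q ^ k0 \<le> 1" using q by (simp add: power_le_one)
      then show ?thesis using q by (intro mult_mono divide_right_mono) auto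
    qed
    finally show ?thesis by simp
  qed
  finally show ?thesis unfolding g_def by simp
qed

lemma geo_h_bound:
  fixes c h :: real
  assumes c: "c > 0" and h: "0 < h" "h \<le> 1"
  shows "h * (2 / (1 - exp (- (c * h)))) \<le> 2 * (1 + c) / c"
proof -
  have x0: "c * h > 0" using c h by simp
  have "1 + c * h \<le> exp (c * h)" by (rule exp_ge_add_one_self)
  then have e1: "exp (- (c * h)) \<le> 1 / (1 + c * h)"
    using x0 by (simp add: exp_minus field_simps)
  have "1 - exp (- (c * h)) \<ge> 1 - 1 / (1 + c * h)" using e1 by simp
  also have "1 - 1 / (1 + c * h) = c * h / (1 + c * h)" using x0 by (simp add: field_simps)
  finally have lb: "1 - exp (- (c * h)) \<ge> c * h / (1 + c * h)" .
  have pos: "c * h / (1 + c * h) > 0" using x0 by simp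
  have "h * (2 / (1 - exp (- (c * h)))) \<le> h * (2 / (c * h / (1 + c * h)))"
  proof -
    have "1 - exp (- (c * h)) > 0" using lb pos by linarith
    then show ?thesis using lb pos h by (intro mult_left_mono divide_left_mono) auto
  qed
  also have "\<dots> = 2 * (1 + c * h) / c" using c h by (simp add: field_simps)
  also have "\<dots> \<le> 2 * (1 + c) / c" using c h by (intro divide_right_mono) (auto simp: mult_left_le)
  finally show ?thesis .
qed

lemma chain_mono:
  fixes t :: "nat \<Rightarrow> real"
  assumes "\<forall>i<n. t i \<le> t (Suc i)"
  shows "i \<le> j \<Longrightarrow> j \<le> n \<Longrightarrow> t i \<le> t j"
proof (induction j)
  case 0
  then show ?case by simp
next
  case (Suc j)
  show ?case
  proof (cases "i = Suc j")
    case True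
    then show ?thesis by simp
  next
    case False
    then have "t i \<le> t j" using Suc by auto
    also have "t j \<le> t (Suc j)" using assms Suc.prems by auto
    finally show ?thesis .
  qed
qed


definition K4c :: "real \<Rightarrow> real \<Rightarrow> real" where "K4c \<alpha> C1 = exp ((1 + C1) / \<alpha>)"
definition K5c :: "real \<Rightarrow> real \<Rightarrow> real \<Rightarrow> real \<Rightarrow> real \<Rightarrow> real" where
  "K5c lam \<alpha> \<beta> C1 C2 = (3 * K4c \<alpha> C1 / 2) powr \<beta> * lam / C2"
definition K7c :: "real \<Rightarrow> real \<Rightarrow> real \<Rightarrow> real \<Rightarrow> real \<Rightarrow> real" where
  "K7c \<alpha> \<beta> C1 H \<delta>0 = exp (\<beta> * (H + C1) / \<alpha> + \<beta> * ((2*H + 2*\<delta>0) + (1 + H + C1/2)) / \<alpha>)"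
definition K8c :: "real \<Rightarrow> real \<Rightarrow> real \<Rightarrow> real \<Rightarrow> real \<Rightarrow> real \<Rightarrow> real \<Rightarrow> real" where
  "K8c lam \<alpha> \<beta> C1 C2 H \<delta>0 = K5c lam \<alpha> \<beta> C1 C2 * K7c \<alpha> \<beta> C1 H \<delta>0 * (2 * (1 + \<beta>/(lam*\<alpha>)) / (\<beta>/(lam*\<alpha>)))"

context
  fixes \<Omega> :: "(complex^'n) set" and F :: "complex^'n \<Rightarrow> complex^'n \<Rightarrow> real"
    and C1 C2 \<alpha> \<beta> lam \<delta>0 H Rb :: real
  assumes fins: "finsler_metric \<Omega> F"
    and H2: "\<forall>z\<in>\<Omega>. \<forall>X. X \<noteq> 0 \<longrightarrow> F z X \<ge> C2 * norm X / (bdist \<Omega> z) powr \<beta>"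
    and C2: "C2 > 0" and \<beta>0: "\<beta> > 0" and \<beta>1: "\<beta> < 1" and \<alpha>: "\<alpha> > 0" and C1: "C1 > 0"
    and bpos: "\<forall>z\<in>\<Omega>. bdist \<Omega> z > 0"
    and MS: "Metric_space \<Omega> (finsler_dist \<Omega> F)"
    and fp: "fourpt \<Omega> (finsler_dist \<Omega> F) \<delta>0" and d0: "\<delta>0 \<ge> 0" and H0: "H \<ge> 0" and lam: "lam \<ge> 1"
    and H1: "\<forall>x\<in>\<Omega>. \<forall>y\<in>\<Omega>. finsler_dist \<Omega> F x y \<ge> \<alpha> * \<bar>ln (bdist \<Omega> x / bdist \<Omega> y)\<bar> - C1"
    and Rb: "Rb > 0" and Rbb: "\<forall>z\<in>\<Omega>. bdist \<Omega> z \<le> Rb"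
begin

lemma H1log:
  assumes "u \<in> \<Omega>" "v \<in> \<Omega>"
  shows "\<alpha> * ln (bdist \<Omega> u) \<le> \<alpha> * ln (bdist \<Omega> v) + finsler_dist \<Omega> F u v + C1"
proof -
  have pu: "bdist \<Omega> u > 0" and pv: "bdist \<Omega> v > 0" using bpos assms by auto
  have "finsler_dist \<Omega> F u v \<ge> \<alpha> * \<bar>ln (bdist \<Omega> u / bdist \<Omega> v)\<bar> - C1" using H1 assms by auto
  moreover have "ln (bdist \<Omega> u / bdist \<Omega> v) = ln (bdist \<Omega> u) - ln (bdist \<Omega> v)" using pu pv by (simp add: ln_div)
  moreover have "\<alpha> * (ln (bdist \<Omega> u) - ln (bdist \<Omega> v)) \<le> \<alpha> * \<bar>ln (bdist \<Omega> u) - ln (bdist \<Omega> v)\<bar>"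
    using \<alpha> by (intro mult_left_mono) auto
  ultimately show ?thesis by (simp add: algebra_simps)
qed

lemma dcomm: "finsler_dist \<Omega> F u v = finsler_dist \<Omega> F v u" using Metric_space.commute[OF MS] by auto
lemma dtri': "u \<in> \<Omega> \<Longrightarrow> v \<in> \<Omega> \<Longrightarrow> w \<in> \<Omega> \<Longrightarrow> finsler_dist \<Omega> F u w \<le> finsler_dist \<Omega> F u v + finsler_dist \<Omega> F v w"
  using Metric_space.triangle[OF MS] by auto
lemma dzero': "u \<in> \<Omega> \<Longrightarrow> finsler_dist \<Omega> F u u = 0" using Metric_space.zero[OF MS] by auto
lemma dnn': "finsler_dist \<Omega> F u v \<ge> 0" using Metric_space.nonneg[OF MS] by auto


lemma curve_bound:
  fixes \<gamma> :: "real \<Rightarrow> complex^'n" and a b :: real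
  assumes qg: "quasi_geodesic \<Omega> (finsler_dist \<Omega> F) lam \<gamma> {a..b}" and ab: "a < b"
    and morse: "\<forall>t\<in>{a..b}. gromov_prod (finsler_dist \<Omega> F) (\<gamma> a) (\<gamma> b) (\<gamma> t) \<le> H"
  shows "euclid_length \<gamma> a b \<le> K8c lam \<alpha> \<beta> C1 C2 H \<delta>0 *
           exp (\<beta> * ((ln (bdist \<Omega> (\<gamma> a)) + ln (bdist \<Omega> (\<gamma> b)))/2 + finsler_dist \<Omega> F (\<gamma> a) (\<gamma> b)/(2*\<alpha>)))"
    and "euclid_length \<gamma> a b \<ge> norm (\<gamma> b - \<gamma> a)"
proof -
  let ?d = "finsler_dist \<Omega> F"
  let ?\<delta> = "bdist \<Omega>"
  have \<gamma>M: "\<gamma> t \<in> \<Omega>" if "t \<in> {a..b}" for t using qg that unfolding quasi_geodesic_def by auto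
  have gup: "?d (\<gamma> t) (\<gamma> s) \<le> lam * \<bar>t - s\<bar>" if "s \<in> {a..b}" "t \<in> {a..b}" for s t
    using qg that unfolding quasi_geodesic_def by auto
  have glo: "\<bar>t - s\<bar> \<le> lam * ?d (\<gamma> t) (\<gamma> s)" if "s \<in> {a..b}" "t \<in> {a..b}" for s t
  proof -
    have "\<bar>t - s\<bar> / lam \<le> ?d (\<gamma> t) (\<gamma> s)" using qg that unfolding quasi_geodesic_def by auto
    then show ?thesis using lam by (simp add: divide_le_eq mult.commute)
  qed
  define LL where "LL = Rb powr \<beta> / C2 * lam"
  have LL0: "LL \<ge> 0" unfolding LL_def using C2 lam by simp
  have lip: "norm (\<gamma> t - \<gamma> s) \<le> LL * \<bar>t - s\<bar>" if "s \<in> {a..b}" "t \<in> {a..b}" for s t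
  proof -
    have "?d (\<gamma> t) (\<gamma> s) \<ge> C2 * norm (\<gamma> t - \<gamma> s) / Rb powr \<beta>"
      by (rule dist_global[OF fins H2 C2 \<beta>0 bpos MS \<gamma>M[OF that(2)] \<gamma>M[OF that(1)] Rb Rbb])
    then have "C2 * norm (\<gamma> t - \<gamma> s) / Rb powr \<beta> \<le> lam * \<bar>t - s\<bar>" using gup[OF that] by linarith
    then have "C2 * norm (\<gamma> t - \<gamma> s) \<le> lam * \<bar>t - s\<bar> * Rb powr \<beta>" using Rb by (simp add: divide_le_eq)
    then have "norm (\<gamma> t - \<gamma> s) \<le> lam * \<bar>t - s\<bar> * Rb powr \<beta> / C2" using C2 by (simp add: le_divide_eq mult.commute)
    then show ?thesis unfolding LL_def by (simp add: field_simps)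
  qed
  have \<gamma>cont: "continuous_on {a..b} \<gamma>"
  proof (rule lipschitz_on_continuous_on)
    show "LL-lipschitz_on {a..b} \<gamma>"
      by (rule lipschitz_onI) (use lip LL0 in \<open>auto simp: dist_norm\<close>)
  qed
  have \<delta>cont: "continuous_on {a..b} (\<lambda>t. ?\<delta> (\<gamma> t))"
    unfolding bdist_def by (intro continuous_on_infdist \<gamma>cont)
  obtain tm where tm: "tm \<in> {a..b}" "\<And>t. t \<in> {a..b} \<Longrightarrow> ?\<delta> (\<gamma> tm) \<le> ?\<delta> (\<gamma> t)"
    using continuous_attains_inf[OF compact_Icc _ \<delta>cont] ab by auto
  define m where "m = ?\<delta> (\<gamma> tm)"
  have m0: "m > 0" unfolding m_def using bpos \<gamma>M tm by auto
  define thr where "thr = C2 * (1/2) / (3/2) powr \<beta> * m powr (1 - \<beta>)"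
  have thr0: "thr > 0" unfolding thr_def using C2 m0 by simp
  have thr_le: "thr \<le> C2 * (?\<delta> (\<gamma> s) / 2) / (3 * (?\<delta> (\<gamma> s) / 2)) powr \<beta>" if "s \<in> {a..b}" for s
  proof -
    define p where "p = ?\<delta> (\<gamma> s)"
    have p0: "p > 0" and pm: "m \<le> p" unfolding p_def m_def using bpos \<gamma>M that tm by auto
    have "(3 * (p / 2)) powr \<beta> = (3/2) powr \<beta> * p powr \<beta>" using p0 by (simp add: powr_mult[symmetric])
    moreover have "p powr (1 - \<beta>) = p / p powr \<beta>" using p0 by (simp add: powr_diff)
    moreover have "m powr (1 - \<beta>) \<le> p powr (1 - \<beta>)" using pm m0 \<beta>1 by (intro powr_mono2) auto
    ultimately have "thr \<le> C2 * (1/2) / (3/2) powr \<beta> * (p / p powr \<beta>)"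
      unfolding thr_def using C2 by (intro mult_left_mono) auto
    also have "\<dots> = C2 * (p / 2) / (3 * (p / 2)) powr \<beta>"
      using \<open>(3 * (p / 2)) powr \<beta> = _\<close> by simp
    finally show ?thesis unfolding p_def .
  qed
  define h where "h = min (1/lam) (thr / (2*lam))"
  have h0: "h > 0" unfolding h_def using lam thr0 by simp
  have lamh1: "lam * h \<le> 1" unfolding h_def using lam by (simp add: min_def field_simps)
  have lamh2: "lam * h < thr"
  proof -
    have "lam * h \<le> lam * (thr / (2*lam))" unfolding h_def using lam by (intro mult_left_mono) auto
    also have "\<dots> = thr / 2" using lam by simp
    finally show ?thesis using thr0 by linarith
  qed
  define N where "N = nat \<lceil>(b - a) / h\<rceil>"
  have Npos: "(b - a) / h > 0" using ab h0 by simp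
  have N1: "N \<ge> 1" unfolding N_def using Npos by linarith
  have NR: "real N \<ge> (b - a) / h" unfolding N_def by linarith
  define hp where "hp = (b - a) / real N"
  have hp0: "hp > 0" unfolding hp_def using ab N1 by simp
  have hph: "hp \<le> h"
  proof -
    have "b - a \<le> h * real N" using NR h0 by (simp add: divide_le_eq mult.commute)
    then show ?thesis unfolding hp_def using N1 by (simp add: divide_le_eq mult.commute)
  qed
  have "lam * hp \<le> lam * h" using hph lam by (intro mult_left_mono) auto
  then have lamhp: "lam * hp \<le> 1" "lam * hp < thr"
    using lamh1 lamh2 by auto
  have hp1: "hp \<le> 1" using lamhp(1) lam hp0
    by (smt (verit) mult_le_cancel_right1 mult.commute)
  define \<tau> where "\<tau> k = a + real k * hp" for k :: nat
  have \<tau>0: "\<tau> 0 = a" unfolding \<tau>_def by simp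
  have \<tau>N: "\<tau> N = b" unfolding \<tau>_def hp_def using N1 by simp
  have \<tau>in: "\<tau> k \<in> {a..b}" if "k \<le> N" for k
  proof -
    have "real k * hp \<le> real N * hp" using that hp0 by (intro mult_right_mono) auto
    then show ?thesis unfolding \<tau>_def using \<tau>N hp0 unfolding \<tau>_def by auto
  qed
  have \<tau>S: "\<tau> (Suc k) = \<tau> k + hp" for k unfolding \<tau>_def by (simp add: algebra_simps)
  define K4 where "K4 = K4c \<alpha> C1"
  have K4: "K4 > 0" unfolding K4_def K4c_def by simp
  have cellb: "?\<delta> (\<gamma> s) \<le> K4 * ?\<delta> (\<gamma> (\<tau> k))" if "k < N" "s \<in> {\<tau> k..\<tau> (Suc k)}" for k s
  proof -
    have sin: "s \<in> {a..b}" using \<tau>in[of k] \<tau>in[of "Suc k"] that by auto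
    have tin: "\<tau> k \<in> {a..b}" using \<tau>in that by auto
    have "?d (\<gamma> s) (\<gamma> (\<tau> k)) \<le> lam * \<bar>s - \<tau> k\<bar>" using gup[OF tin sin] .
    also have "\<dots> \<le> lam * hp" using that \<tau>S[of k] lam by (intro mult_left_mono) auto
    finally have dd: "?d (\<gamma> s) (\<gamma> (\<tau> k)) \<le> 1" using lamhp by linarith
    have "\<alpha> * ln (?\<delta> (\<gamma> s)) \<le> \<alpha> * ln (?\<delta> (\<gamma> (\<tau> k))) + ?d (\<gamma> s) (\<gamma> (\<tau> k)) + C1"
      by (rule H1log[OF \<gamma>M[OF sin] \<gamma>M[OF tin]])
    moreover have "\<alpha> * (ln (?\<delta> (\<gamma> (\<tau> k))) + (1 + C1) / \<alpha>) = \<alpha> * ln (?\<delta> (\<gamma> (\<tau> k))) + (1 + C1)"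
      using \<alpha> by (simp add: field_simps)
    ultimately have "\<alpha> * ln (?\<delta> (\<gamma> s)) \<le> \<alpha> * (ln (?\<delta> (\<gamma> (\<tau> k))) + (1 + C1) / \<alpha>)"
      using dd by linarith
    then have "ln (?\<delta> (\<gamma> s)) \<le> ln (?\<delta> (\<gamma> (\<tau> k))) + (1 + C1) / \<alpha>" using \<alpha> by simp
    then have "exp (ln (?\<delta> (\<gamma> s))) \<le> exp (ln (?\<delta> (\<gamma> (\<tau> k))) + (1 + C1) / \<alpha>)" by simp
    then show ?thesis using bpos \<gamma>M sin tin unfolding K4_def K4c_def by (simp add: exp_add mult.commute)
  qed
  define K5 where "K5 = K5c lam \<alpha> \<beta> C1 C2"
  have K5: "K5 > 0" unfolding K5_def K5c_def using K4 C2 lam unfolding K4_def by simp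
  define w where "w k = K5 * ?\<delta> (\<gamma> (\<tau> k)) powr \<beta>" for k
  have w0: "w k \<ge> 0" for k unfolding w_def using K5 by simp
  have cell: "norm (\<gamma> t - \<gamma> s) \<le> w k * (t - s)" if "k < N" "\<tau> k \<le> s" "s \<le> t" "t \<le> \<tau> (Suc k)" for k s t
  proof -
    have sin: "s \<in> {a..b}" and tin: "t \<in> {a..b}" using \<tau>in[of k] \<tau>in[of "Suc k"] that by auto
    have dst: "?d (\<gamma> s) (\<gamma> t) \<le> lam * (t - s)" using gup[OF tin sin] dcomm that by simp
    also have "\<dots> \<le> lam * hp" using that \<tau>S[of k] lam by (intro mult_left_mono) auto
    also have "\<dots> < thr" using lamhp by simp
    also have "\<dots> \<le> C2 * (?\<delta> (\<gamma> s) / 2) / (3 * (?\<delta> (\<gamma> s) / 2)) powr \<beta>" using thr_le[OF sin] .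
    finally have small: "?d (\<gamma> s) (\<gamma> t) < C2 * (?\<delta> (\<gamma> s) / 2) / (3 * (?\<delta> (\<gamma> s) / 2)) powr \<beta>" .
    have "norm (\<gamma> s - \<gamma> t) \<le> (3 * (?\<delta> (\<gamma> s) / 2)) powr \<beta> * ?d (\<gamma> s) (\<gamma> t) / C2"
      by (rule dist_local2[OF fins H2 C2 \<beta>0 bpos MS \<gamma>M[OF sin] \<gamma>M[OF tin] small])
    also have "\<dots> \<le> (3 * K4 / 2) powr \<beta> * ?\<delta> (\<gamma> (\<tau> k)) powr \<beta> * (lam * (t - s)) / C2"
    proof -
      have ps: "?\<delta> (\<gamma> s) > 0" "?\<delta> (\<gamma> (\<tau> k)) > 0" using bpos \<gamma>M sin \<tau>in that by auto
      have "(3 * (?\<delta> (\<gamma> s) / 2)) powr \<beta> \<le> (3 * (K4 * ?\<delta> (\<gamma> (\<tau> k)) / 2)) powr \<beta>"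
        using cellb[of k s] that ps \<beta>0 by (intro powr_mono2) auto
      also have "\<dots> = (3 * K4 / 2) powr \<beta> * ?\<delta> (\<gamma> (\<tau> k)) powr \<beta>"
      proof -
        have "3 * (K4 * ?\<delta> (\<gamma> (\<tau> k)) / 2) = (3 * K4 / 2) * ?\<delta> (\<gamma> (\<tau> k))" by simp
        then show ?thesis using K4 ps by (simp only: powr_mult)
      qed
      finally have A: "(3 * (?\<delta> (\<gamma> s) / 2)) powr \<beta> \<le> (3 * K4 / 2) powr \<beta> * ?\<delta> (\<gamma> (\<tau> k)) powr \<beta>" .
      show ?thesis using A dst C2 dnn'
        by (intro divide_right_mono mult_mono) auto
    qed
    also have "\<dots> = w k * (t - s)" unfolding w_def K5_def K5c_def K4_def by (simp add: field_simps)
    finally show ?thesis by (simp add: norm_minus_commute)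
  qed
  define cl where "cl k t = min (max (t - \<tau> k) 0) hp" for k t
  define \<Phi> where "\<Phi> t = (\<Sum>k<N. w k * cl k t)" for t
  have clmono: "cl k s \<le> cl k t" if "s \<le> t" for k s t unfolding cl_def using that by auto
  have \<Phi>cell: "w k * (t - s) \<le> \<Phi> t - \<Phi> s" if "k < N" "\<tau> k \<le> s" "s \<le> t" "t \<le> \<tau> (Suc k)" for k s t
  proof -
    have "\<Phi> t - \<Phi> s = (\<Sum>j<N. w j * (cl j t - cl j s))"
      unfolding \<Phi>_def by (simp add: sum_subtractf right_diff_distrib)
    also have "\<dots> \<ge> w k * (cl k t - cl k s)"
      using that w0 clmono by (intro member_le_sum) (auto intro: mult_nonneg_nonneg)
    moreover have "cl k t - cl k s = t - s" unfolding cl_def using that \<tau>S[of k] by auto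
    ultimately show ?thesis by simp
  qed
  have glob: "\<forall>s t. a \<le> s \<longrightarrow> s \<le> t \<longrightarrow> t \<le> \<tau> j \<longrightarrow> norm (\<gamma> t - \<gamma> s) \<le> \<Phi> t - \<Phi> s" if "j \<le> N" for j
    using that
  proof (induction j)
    case 0
    show ?case
    proof (intro allI impI)
      fix s t assume "a \<le> s" "s \<le> t" "t \<le> \<tau> 0"
      then have "s = t" using \<tau>0 by simp
      then show "norm (\<gamma> t - \<gamma> s) \<le> \<Phi> t - \<Phi> s" by simp
    qed
  next
    case (Suc j)
    show ?case
    proof (intro allI impI)
      fix s t assume st: "a \<le> s" "s \<le> t" "t \<le> \<tau> (Suc j)"
      have IH: "\<forall>s t. a \<le> s \<longrightarrow> s \<le> t \<longrightarrow> t \<le> \<tau> j \<longrightarrow> norm (\<gamma> t - \<gamma> s) \<le> \<Phi> t - \<Phi> s"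
        using Suc by auto
      have jN: "j < N" using Suc by auto
      show "norm (\<gamma> t - \<gamma> s) \<le> \<Phi> t - \<Phi> s"
      proof (cases "t \<le> \<tau> j")
        case True
        then show ?thesis using IH st by auto
      next
        case False
        show ?thesis
        proof (cases "\<tau> j \<le> s")
          case True
          then show ?thesis using cell[OF jN True st(2) st(3)] \<Phi>cell[OF jN True st(2) st(3)] by linarith
        next
          case False2: False
          have tj: "\<tau> j \<in> {a..b}" using \<tau>in jN by auto
          have sin: "s \<in> {a..b}" "t \<in> {a..b}" using st tj False False2 \<tau>in[of "Suc j"] jN by auto
          have "norm (\<gamma> t - \<gamma> s) \<le> norm (\<gamma> t - \<gamma> (\<tau> j)) + norm (\<gamma> (\<tau> j) - \<gamma> s)"
            using norm_triangle_ineq[of "\<gamma> t - \<gamma> (\<tau> j)" "\<gamma> (\<tau> j) - \<gamma> s"] by simp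
          moreover have "norm (\<gamma> (\<tau> j) - \<gamma> s) \<le> \<Phi> (\<tau> j) - \<Phi> s" using IH st False2 by auto
          moreover have "norm (\<gamma> t - \<gamma> (\<tau> j)) \<le> \<Phi> t - \<Phi> (\<tau> j)"
            using cell[OF jN _ _ st(3)] \<Phi>cell[OF jN _ _ st(3)] False by force
          ultimately show ?thesis by linarith
        qed
      qed
    qed
  qed
  have globab: "norm (\<gamma> t - \<gamma> s) \<le> \<Phi> t - \<Phi> s" if "a \<le> s" "s \<le> t" "t \<le> b" for s t
    using glob[of N] \<tau>N that by auto
  define PS where "PS = {(\<Sum>i<n. norm (\<gamma> (t (Suc i)) - \<gamma> (t i))) | t n.
       t 0 = a \<and> t n = b \<and> (\<forall>i<n. t i \<le> t (Suc i))}"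
  have PSb: "v \<le> \<Phi> b - \<Phi> a" if vPS: "v \<in> PS" for v
  proof -
    obtain t n where tn: "v = (\<Sum>i<n. norm (\<gamma> (t (Suc i)) - \<gamma> (t i)))" "t 0 = a" "t n = b" "\<forall>i<n. t i \<le> t (Suc i)"
      using vPS unfolding PS_def by blast
    have rng: "a \<le> t i" "t i \<le> b" if "i \<le> n" for i
      using chain_mono[OF tn(4), of 0 i] chain_mono[OF tn(4), of i n] that tn by auto
    have "v \<le> (\<Sum>i<n. \<Phi> (t (Suc i)) - \<Phi> (t i))"
      unfolding tn(1) using rng tn(4) by (intro sum_mono globab) auto
    also have "\<dots> = \<Phi> b - \<Phi> a" using tn sum_lessThan_telescope[of "\<lambda>i. \<Phi> (t i)" n] by simp
    finally show ?thesis .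
  qed
  define t1 where "t1 i = (if i = 0 then a else b)" for i :: nat
  have t1PS: "norm (\<gamma> b - \<gamma> a) \<in> PS" unfolding PS_def
    by (rule CollectI, rule exI[of _ t1], rule exI[of _ 1]) (use ab in \<open>auto simp: t1_def\<close>)
  have EL: "euclid_length \<gamma> a b = Sup PS" unfolding euclid_length_def PS_def ..
  have ELub: "euclid_length \<gamma> a b \<le> \<Phi> b - \<Phi> a"
    unfolding EL using t1PS PSb by (intro cSup_least) auto
  show "euclid_length \<gamma> a b \<ge> norm (\<gamma> b - \<gamma> a)"
  proof -
    have "bdd_above PS" using PSb by (intro bdd_aboveI[where M="\<Phi> b - \<Phi> a"]) auto
    then show ?thesis unfolding EL using t1PS by (intro cSup_upper) auto
  qed
  have \<Phi>ba: "\<Phi> b - \<Phi> a = (\<Sum>k<N. w k * hp)"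
  proof -
    have "cl k b = hp" if "k < N" for k
    proof -
      have "\<tau> (Suc k) \<le> b" using \<tau>in[of "Suc k"] that by auto
      then show ?thesis unfolding cl_def using \<tau>S[of k] hp0 by auto
    qed
    moreover have "cl k a = 0" for k unfolding cl_def \<tau>_def using hp0 by (auto simp: min_def max_def)
    ultimately show ?thesis unfolding \<Phi>_def by (simp add: sum_subtractf[symmetric])
  qed
  define x where "x = \<gamma> a"
  define y where "y = \<gamma> b"
  define D where "D = ?d x y"
  have xy: "x \<in> \<Omega>" "y \<in> \<Omega>" unfolding x_def y_def using \<gamma>M ab by auto
  define z where "z k = \<gamma> (\<tau> k)" for k
  have zin: "z k \<in> \<Omega>" "\<tau> k \<in> {a..b}" if "k \<le> N" for k unfolding z_def using \<tau>in \<gamma>M that by auto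
  define u where "u k = ?d x (z k)" for k
  have u0: "u 0 = 0" unfolding u_def z_def x_def using \<tau>0 dzero' xy by (simp add: x_def)
  have uN: "u N = D" unfolding u_def z_def D_def y_def using \<tau>N by simp
  have ustep: "\<bar>u (Suc k) - u k\<bar> \<le> 1" if "k < N" for k
  proof -
    have i: "z k \<in> \<Omega>" "z (Suc k) \<in> \<Omega>" "\<tau> k \<in> {a..b}" "\<tau> (Suc k) \<in> {a..b}" using zin that by auto
    have "?d x (z (Suc k)) \<le> ?d x (z k) + ?d (z k) (z (Suc k))" using dtri' xy i by auto
    moreover have "?d x (z k) \<le> ?d x (z (Suc k)) + ?d (z (Suc k)) (z k)" using dtri' xy i by auto
    moreover have "?d (z (Suc k)) (z k) \<le> lam * \<bar>\<tau> (Suc k) - \<tau> k\<bar>" unfolding z_def using gup i by auto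
    moreover have "\<bar>\<tau> (Suc k) - \<tau> k\<bar> = hp" using \<tau>S hp0 by simp
    ultimately show ?thesis unfolding u_def using dcomm[of "z k" "z (Suc k)"] lamhp by auto
  qed
  define E where "E = 2*H + 2*\<delta>0"
  define E2 where "E2 = 1 + H + C1/2"
  have sep: "\<bar>\<tau> k - \<tau> j\<bar> \<le> lam * (\<bar>u k - u j\<bar> + E)" if "k \<le> N" "j \<le> N" for k j
  proof -
    have g1: "gromov_prod ?d x y (z k) \<le> H" "gromov_prod ?d x y (z j) \<le> H"
      using morse zin that unfolding x_def y_def z_def by auto
    have "?d (z k) (z j) \<le> \<bar>?d x (z k) - ?d x (z j)\<bar> + 2*H + 2*\<delta>0"
      by (rule close_pts[OF MS fp xy zin(1)[OF that(1)] zin(1)[OF that(2)] g1])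
    moreover have "\<bar>\<tau> k - \<tau> j\<bar> \<le> lam * ?d (z k) (z j)" unfolding z_def using glo zin that by auto
    ultimately show ?thesis unfolding u_def E_def using lam
      by (smt (verit, best) mult_left_mono)
  qed
  have dx: "?\<delta> x > 0" "?\<delta> y > 0" using bpos xy by auto
  define lx where "lx = ln (?\<delta> x)"
  define ly where "ly = ln (?\<delta> y)"
  have H1xy: "\<bar>\<alpha> * ly - \<alpha> * lx\<bar> \<le> D + C1"
  proof -
    have "D \<ge> \<alpha> * \<bar>ln (?\<delta> x / ?\<delta> y)\<bar> - C1" unfolding D_def using H1 xy by auto
    moreover have "ln (?\<delta> x / ?\<delta> y) = lx - ly" unfolding lx_def ly_def using dx by (simp add: ln_div)
    moreover have "\<alpha> * \<bar>lx - ly\<bar> = \<bar>\<alpha> * ly - \<alpha> * lx\<bar>"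
    proof -
      have "\<alpha> * \<bar>lx - ly\<bar> = \<bar>\<alpha> * (lx - ly)\<bar>" using \<alpha> by (simp add: abs_mult)
      also have "\<dots> = \<bar>\<alpha> * ly - \<alpha> * lx\<bar>" by (metis abs_minus_commute right_diff_distrib)
      finally show ?thesis .
    qed
    ultimately show ?thesis by simp
  qed
  define us where "us = (D + 2*H + \<alpha> * ly - \<alpha> * lx) / 2"
  have us2: "2 * us = D + 2*H + \<alpha> * ly - \<alpha> * lx" unfolding us_def by simp
  obtain k0 where k0: "k0 \<le> N" "\<bar>u k0 - us\<bar> \<le> E2"
  proof (cases "us \<le> 0")
    case True
    have W: "\<alpha> * ly - \<alpha> * lx \<ge> - (D + C1)" using H1xy by (simp add: abs_le_iff)
    have "\<bar>u 0 - us\<bar> = - us" using u0 True by simp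
    also have "\<dots> \<le> E2" using us2 W H0 C1 unfolding E2_def by linarith
    finally show ?thesis using that[of 0] by auto
  next
    case False
    show ?thesis
    proof (cases "us \<ge> D")
      case True
      have W: "\<alpha> * ly - \<alpha> * lx \<le> D + C1" using H1xy by (simp add: abs_le_iff)
      have "\<bar>u N - us\<bar> = us - D" using uN True by simp
      also have "\<dots> \<le> E2" using us2 W H0 C1 unfolding E2_def by linarith
      finally show ?thesis using that[of N] by auto
    next
      case False2: False
      define KS where "KS = {k. k \<le> N \<and> u k \<le> us}"
      have fin: "finite KS" unfolding KS_def by auto
      have "0 \<in> KS" unfolding KS_def using u0 False by auto
      define k1 where "k1 = Max KS"
      have k1K: "k1 \<in> KS" unfolding k1_def using fin \<open>0 \<in> KS\<close> by (intro Max_in) auto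
      have k1max: "k \<le> k1" if "k \<in> KS" for k unfolding k1_def using fin that by auto
      have "k1 \<noteq> N" using k1K uN False2 unfolding KS_def by auto
      then have k1N: "k1 < N" using k1K unfolding KS_def by auto
      have "Suc k1 \<notin> KS" using k1max by fastforce
      then have "u (Suc k1) > us" using k1N unfolding KS_def by auto
      moreover have "u k1 \<le> us" using k1K unfolding KS_def by auto
      moreover note ustep[OF k1N]
      ultimately have "\<bar>u k1 - us\<bar> \<le> E2" unfolding E2_def using H0 C1 by auto
      then show ?thesis using that[of k1] k1N by auto
    qed
  qed
  define c where "c = \<beta> / (lam * \<alpha>)"
  have c0: "c > 0" unfolding c_def using \<beta>0 lam \<alpha> by simp
  define \<Lambda> where "\<Lambda> = (lx + ly) / 2 + D / (2*\<alpha>)"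
  define K7 where "K7 = K7c \<alpha> \<beta> C1 H \<delta>0"
  have K7eq: "K7 = exp (\<beta> * (H + C1) / \<alpha> + \<beta> * (E + E2) / \<alpha>)" unfolding K7_def K7c_def E_def E2_def ..
  define q where "q = exp (- (c * hp))"
  have q01: "0 < q" "q < 1" unfolding q_def using c0 hp0 by auto
  define dk where "dk k = (if k0 \<le> k then k - k0 else k0 - k)" for k
  have dkeq: "\<bar>\<tau> k - \<tau> k0\<bar> = real (dk k) * hp" for k
    unfolding dk_def \<tau>_def using hp0 by (auto simp: abs_if algebra_simps of_nat_diff)
  have decay: "?\<delta> (z k) powr \<beta> \<le> exp (\<beta> * \<Lambda>) * K7 * q ^ dk k" if kN: "k \<le> N" for k
  proof -
    have zk: "z k \<in> \<Omega>" using zin kN by auto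
    have pz: "?\<delta> (z k) > 0" using bpos zk by auto
    define lz where "lz = ln (?\<delta> (z k))"
    have A: "\<alpha> * lz \<le> \<alpha> * lx + u k + C1"
      using H1log[OF zk xy(1)] dcomm[of "z k" x] unfolding lz_def lx_def u_def by simp
    have mk: "gromov_prod ?d x y (z k) \<le> H" using morse zin kN unfolding x_def y_def z_def by auto
    have dzy: "?d (z k) y \<le> D + 2*H - u k"
      using mk gp2'[of ?d x y "z k"] dcomm[of y "z k"] unfolding u_def D_def by linarith
    have B: "\<alpha> * lz \<le> \<alpha> * ly + ?d (z k) y + C1"
      using H1log[OF zk xy(2)] unfolding lz_def ly_def by simp
    have dec: "2 * (\<alpha> * lz) \<le> \<alpha> * lx + \<alpha> * ly + D + 2*H + 2*C1 - 2 * \<bar>u k - us\<bar>"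
    proof (cases "u k \<le> us")
      case True
      then have e: "\<bar>u k - us\<bar> = us - u k" by simp
      have "2 * (\<alpha> * lz) \<le> \<alpha> * lx + \<alpha> * ly + D + 2*H + 2*C1 - 2 * us + 2 * u k" using A us2 by linarith
      then show ?thesis unfolding e by (simp add: algebra_simps)
    next
      case False
      then have e: "\<bar>u k - us\<bar> = u k - us" by simp
      have "2 * (\<alpha> * lz) \<le> \<alpha> * lx + \<alpha> * ly + D + 2*H + 2*C1 - 2 * u k + 2 * us" using B dzy us2 by linarith
      then show ?thesis unfolding e by (simp add: algebra_simps)
    qed
    have sp: "\<bar>\<tau> k - \<tau> k0\<bar> \<le> lam * (\<bar>u k - u k0\<bar> + E)" using sep kN k0 by auto
    have "\<bar>\<tau> k - \<tau> k0\<bar> / lam \<le> \<bar>u k - u k0\<bar> + E" using sp lam by (simp add: divide_le_eq mult.commute)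
    then have sp2: "\<bar>u k - us\<bar> \<ge> \<bar>\<tau> k - \<tau> k0\<bar> / lam - E - E2" using k0 by linarith
    define Y where "Y = \<Lambda> + ((H + C1) + (E + E2)) / \<alpha> - \<bar>\<tau> k - \<tau> k0\<bar> / (lam * \<alpha>)"
    have aY: "\<alpha> * Y = (\<alpha> * lx) / 2 + (\<alpha> * ly) / 2 + D / 2 + H + C1 + E + E2 - \<bar>\<tau> k - \<tau> k0\<bar> / lam"
      unfolding Y_def \<Lambda>_def using \<alpha> lam by (simp add: field_simps)
    have "\<alpha> * lz \<le> \<alpha> * Y"
    proof -
      obtain AA where AA: "AA = \<bar>u k - us\<bar>" by simp
      obtain TT where TT: "TT = \<bar>\<tau> k - \<tau> k0\<bar> / lam" by simp
      have d1: "2 * (\<alpha> * lz) \<le> \<alpha> * lx + \<alpha> * ly + D + 2 * H + 2 * C1 - 2 * AA" using dec unfolding AA .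
      have d2: "TT - E - E2 \<le> AA" using sp2 unfolding AA TT .
      have "\<alpha> * lz \<le> \<alpha> * lx / 2 + \<alpha> * ly / 2 + D / 2 + H + C1 + E + E2 - TT" using d1 d2 by linarith
      then show ?thesis unfolding aY TT .
    qed
    then have lzY: "lz \<le> Y" using \<alpha> by simp
    have "?\<delta> (z k) powr \<beta> = exp (\<beta> * lz)" unfolding lz_def using pz by (simp add: powr_def)
    also have "\<dots> \<le> exp (\<beta> * Y)" using lzY \<beta>0 by simp
    also have "\<beta> * Y = \<beta> * \<Lambda> + (\<beta> * (H + C1) / \<alpha> + \<beta> * (E + E2) / \<alpha>) + real (dk k) * (- (c * hp))"
      unfolding Y_def c_def dkeq using \<alpha> lam by (simp add: field_simps)
    also have "exp \<dots> = exp (\<beta> * \<Lambda>) * K7 * q ^ dk k"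
    proof -
      have "exp (\<beta> * \<Lambda> + (\<beta> * (H + C1) / \<alpha> + \<beta> * (E + E2) / \<alpha>) + real (dk k) * (- (c * hp)))
          = exp (\<beta> * \<Lambda>) * exp (\<beta> * (H + C1) / \<alpha> + \<beta> * (E + E2) / \<alpha>) * exp (real (dk k) * (- (c * hp)))"
        by (simp only: exp_add)
      moreover have "exp (real (dk k) * (- (c * hp))) = exp (- (c * hp)) ^ dk k" by (rule exp_of_nat_mult)
      ultimately show ?thesis unfolding K7eq q_def by simp
    qed
    finally show ?thesis .
  qed
  have "(\<Sum>k<N. w k * hp) \<le> (\<Sum>k<N. K5 * (exp (\<beta> * \<Lambda>) * K7 * q ^ dk k) * hp)"
    unfolding w_def using decay K5 hp0 unfolding z_def by (intro sum_mono mult_right_mono mult_left_mono) auto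
  also have "\<dots> = K5 * exp (\<beta> * \<Lambda>) * K7 * (hp * (\<Sum>k<N. q ^ dk k))"
    by (simp add: sum_distrib_left sum_distrib_right algebra_simps)
  also have "\<dots> \<le> K5 * exp (\<beta> * \<Lambda>) * K7 * (hp * (2 / (1 - q)))"
  proof -
    have "(\<Sum>k<N. q ^ dk k) \<le> 2 / (1 - q)" unfolding dk_def by (rule geo_two_sided[OF q01])
    then show ?thesis using K5 hp0 unfolding K7eq by (intro mult_left_mono) auto
  qed
  also have "\<dots> \<le> K5 * exp (\<beta> * \<Lambda>) * K7 * (2 * (1 + c) / c)"
    unfolding q_def using geo_h_bound[OF c0 hp0 hp1] K5 unfolding K7eq by (intro mult_left_mono) auto
  also have "\<dots> = K8c lam \<alpha> \<beta> C1 C2 H \<delta>0 * exp (\<beta> * \<Lambda>)"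
    unfolding K8c_def K5_def[symmetric] K7_def[symmetric] c_def[symmetric] by simp
  finally have fin: "(\<Sum>k<N. w k * hp) \<le> K8c lam \<alpha> \<beta> C1 C2 H \<delta>0 * exp (\<beta> * \<Lambda>)" .
  show "euclid_length \<gamma> a b \<le> K8c lam \<alpha> \<beta> C1 C2 H \<delta>0 *
           exp (\<beta> * ((ln (bdist \<Omega> (\<gamma> a)) + ln (bdist \<Omega> (\<gamma> b)))/2 + finsler_dist \<Omega> F (\<gamma> a) (\<gamma> b)/(2*\<alpha>)))"
    using ELub \<Phi>ba fin unfolding \<Lambda>_def lx_def ly_def D_def x_def y_def by linarith
qed

end


theorem theorem1p2:
  fixes \<Omega> :: "(complex^'n) set"
    and F :: "complex^'n \<Rightarrow> complex^'n \<Rightarrow> real"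
    and C1 C2 \<alpha> \<beta> lam :: real
  assumes n2: "CARD('n) \<ge> 2"
    and dom: "open \<Omega>" "connected \<Omega>" "\<Omega> \<noteq> {}" "bounded \<Omega>"
    and fins: "finsler_metric \<Omega> F"
    and compl: "Metric_space.mcomplete \<Omega> (finsler_dist \<Omega> F)"
    and hyp: "gromov_hyperbolic \<Omega> (finsler_dist \<Omega> F)"
    and cst: "C1 > 0" "C2 > 0" "\<alpha> > 0" "0 < \<beta>" "\<beta> < 1"
    and H1: "\<forall>x\<in>\<Omega>. \<forall>y\<in>\<Omega>.
               finsler_dist \<Omega> F x y \<ge> \<alpha> * \<bar>ln (bdist \<Omega> x / bdist \<Omega> y)\<bar> - C1"
    and H2: "\<forall>z\<in>\<Omega>. \<forall>X. X \<noteq> 0 \<longrightarrow> F z X \<ge> C2 * norm X / (bdist \<Omega> z) powr \<beta>"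
    and lam: "lam \<ge> 1"
  shows "\<exists>C>0. \<forall>x\<in>\<Omega>. \<forall>y\<in>\<Omega>. \<forall>\<gamma> a b.
           x \<noteq> y \<and> a \<le> b \<and> quasi_geodesic \<Omega> (finsler_dist \<Omega> F) lam \<gamma> {a..b} \<and>
           \<gamma> a = x \<and> \<gamma> b = y \<longrightarrow>
           finsler_dist \<Omega> F x y \<ge>
             2 * \<alpha> * ln (euclid_length \<gamma> a b powr (1 / \<beta>) / sqrt (bdist \<Omega> x * bdist \<Omega> y)) - C"
proof -
  let ?d = "finsler_dist \<Omega> F"
  have MS: "Metric_space \<Omega> ?d" and geo: "geodesic_space \<Omega> ?d"
    using hyp unfolding gromov_hyperbolic_def by auto
  obtain \<delta>0 where d0: "\<delta>0 \<ge> 0" and fp: "fourpt \<Omega> ?d \<delta>0"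
    using hyp unfolding gromov_hyperbolic_def fourpt_def by auto
  have bpos: "\<forall>z\<in>\<Omega>. bdist \<Omega> z > 0" using bdist_pos dom by blast
  obtain Rb where Rb: "Rb > 0" "\<forall>z\<in>\<Omega>. bdist \<Omega> z \<le> Rb" using bdist_bounded dom by blast
  define H where "H = Hc lam \<delta>0"
  have H0: "H \<ge> 0"
  proof -
    have "D0c lam \<delta>0 \<ge> 0" using D0c_nonneg d0 lam by auto
    then show ?thesis unfolding H_def Hc_def by simp
  qed
  define K8 where "K8 = K8c lam \<alpha> \<beta> C1 C2 H \<delta>0"
  have K8: "K8 > 0"
  proof -
    have "K4c \<alpha> C1 > 0" unfolding K4c_def by simp
    then have "K5c lam \<alpha> \<beta> C1 C2 > 0" unfolding K5c_def using cst lam by simp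
    moreover have "K7c \<alpha> \<beta> C1 H \<delta>0 > 0" unfolding K7c_def by simp
    moreover have cpos: "\<beta>/(lam*\<alpha>) > 0" using cst lam by simp
    moreover have "2 * (1 + \<beta>/(lam*\<alpha>)) / (\<beta>/(lam*\<alpha>)) > 0" using cpos by (rule divide_pos_pos[rotated]) (use cpos in auto)
    ultimately show ?thesis unfolding K8_def K8c_def by (intro mult_pos_pos) auto
  qed
  define C where "C = \<bar>2 * \<alpha> * ln K8 / \<beta>\<bar> + 1"
  have C0: "C > 0"
  proof -
    have "\<bar>2 * \<alpha> * ln K8 / \<beta>\<bar> \<ge> 0" by simp
    then show ?thesis unfolding C_def by linarith
  qed
  show ?thesis
  proof (intro exI[of _ C] conjI C0 ballI allI impI)
    fix x y \<gamma> a b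
    assume xy: "x \<in> \<Omega>" "y \<in> \<Omega>"
      and A: "x \<noteq> y \<and> a \<le> b \<and> quasi_geodesic \<Omega> ?d lam \<gamma> {a..b} \<and> \<gamma> a = x \<and> \<gamma> b = y"
    have qg: "quasi_geodesic \<Omega> ?d lam \<gamma> {a..b}" and ab: "a \<le> b" and ga: "\<gamma> a = x" "\<gamma> b = y"
      using A by auto
    have ab': "a < b" using A by (cases "a = b") auto
    obtain g where g: "g ` {0..?d x y} \<subseteq> \<Omega>" "g 0 = x" "g (?d x y) = y"
      "\<forall>s\<in>{0..?d x y}. \<forall>t\<in>{0..?d x y}. ?d (g s) (g t) = \<bar>s - t\<bar>"
      using geo xy unfolding geodesic_space_def by blast
    have morse: "\<forall>t\<in>{a..b}. gromov_prod ?d (\<gamma> a) (\<gamma> b) (\<gamma> t) \<le> H"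
    proof
      fix t assume t: "t \<in> {a..b}"
      show "gromov_prod ?d (\<gamma> a) (\<gamma> b) (\<gamma> t) \<le> H"
        unfolding H_def
        by (rule step2[OF MS fp d0 lam qg ab]) (use g ga t in auto)
    qed
    have CB: "euclid_length \<gamma> a b \<le> K8 * exp (\<beta> * ((ln (bdist \<Omega> (\<gamma> a)) + ln (bdist \<Omega> (\<gamma> b)))/2 + ?d (\<gamma> a) (\<gamma> b)/(2*\<alpha>)))"
      "euclid_length \<gamma> a b \<ge> norm (\<gamma> b - \<gamma> a)"
      unfolding K8_def
      using curve_bound[OF fins H2 cst(2) cst(4) cst(5) cst(3) cst(1) bpos MS fp d0 H0 lam H1 Rb qg ab' morse]
      by auto
    define L where "L = euclid_length \<gamma> a b"
    define lx where "lx = ln (bdist \<Omega> x)"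
    define ly where "ly = ln (bdist \<Omega> y)"
    define D where "D = ?d x y"
    have L0: "L > 0"
    proof -
      have "norm (\<gamma> b - \<gamma> a) > 0" using A by auto
      then show ?thesis using CB(2) unfolding L_def by linarith
    qed
    have dx: "bdist \<Omega> x > 0" "bdist \<Omega> y > 0" using bpos xy by auto
    have LB: "L \<le> K8 * exp (\<beta> * ((lx + ly)/2 + D/(2*\<alpha>)))"
      using CB(1) ga unfolding L_def lx_def ly_def D_def by simp
    have lnL: "ln L \<le> ln K8 + \<beta> * ((lx + ly)/2 + D/(2*\<alpha>))"
    proof -
      have "ln L \<le> ln (K8 * exp (\<beta> * ((lx + ly)/2 + D/(2*\<alpha>))))" using LB L0 by simp
      also have "\<dots> = ln K8 + \<beta> * ((lx + ly)/2 + D/(2*\<alpha>))" using K8 by (simp add: ln_mult)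
      finally show ?thesis .
    qed
    have eq: "ln (L powr (1 / \<beta>) / sqrt (bdist \<Omega> x * bdist \<Omega> y)) = ln L / \<beta> - (lx + ly) / 2"
    proof -
      have "ln (L powr (1 / \<beta>) / sqrt (bdist \<Omega> x * bdist \<Omega> y))
          = ln (L powr (1 / \<beta>)) - ln (sqrt (bdist \<Omega> x * bdist \<Omega> y))"
        using L0 dx by (simp add: ln_div)
      also have "ln (L powr (1 / \<beta>)) = ln L / \<beta>" using L0 by (simp add: ln_powr)
      also have "ln (sqrt (bdist \<Omega> x * bdist \<Omega> y)) = (lx + ly) / 2"
        unfolding lx_def ly_def using dx by (simp add: ln_sqrt ln_mult)
      finally show ?thesis .
    qed
    have "ln L / \<beta> \<le> ln K8 / \<beta> + ((lx + ly)/2 + D/(2*\<alpha>))"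
    proof -
      have "ln L / \<beta> \<le> (ln K8 + \<beta> * ((lx + ly)/2 + D/(2*\<alpha>))) / \<beta>"
        using lnL cst by (intro divide_right_mono) auto
      also have "\<dots> = ln K8 / \<beta> + ((lx + ly)/2 + D/(2*\<alpha>))" using cst by (simp add: field_simps)
      finally show ?thesis .
    qed
    then have "ln L / \<beta> - (lx + ly) / 2 \<le> ln K8 / \<beta> + D/(2*\<alpha>)" by simp
    then have "2 * \<alpha> * (ln L / \<beta> - (lx + ly) / 2) \<le> 2 * \<alpha> * (ln K8 / \<beta> + D/(2*\<alpha>))"
      using cst by (intro mult_left_mono) auto
    also have "\<dots> = 2 * \<alpha> * ln K8 / \<beta> + D" using cst by (simp add: field_simps)
    also have "\<dots> \<le> C - 1 + D"
    proof -
      have "2 * \<alpha> * ln K8 / \<beta> \<le> \<bar>2 * \<alpha> * ln K8 / \<beta>\<bar>" by (rule abs_ge_self)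
      then show ?thesis unfolding C_def by linarith
    qed
    finally have "2 * \<alpha> * ln (L powr (1 / \<beta>) / sqrt (bdist \<Omega> x * bdist \<Omega> y)) \<le> C - 1 + D" unfolding eq .
    then show "?d x y \<ge> 2 * \<alpha> * ln (euclid_length \<gamma> a b powr (1 / \<beta>) / sqrt (bdist \<Omega> x * bdist \<Omega> y)) - C"
      unfolding L_def D_def by linarith
  qed
qed


end
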